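(* Let $(X_t)_{t\in[0,1]}$ be a centered process as in the context whose KL coefficients $(Z_k)$ are mutually independent, each $Z_k$ sub-Gaussian with mean $0$ and parameter $\sqrt{\lambda_k}$; assume each eigenfunction $e_k$ is Lipschitz on $[0,1]$ with constant $G(k)$ and $C_{\mathrm M}:=\sup_k\lambda_kG(k)^2<\infty$. Let $c_g\in\mathbb R$, $K_g\ge0$, $K'_g\ge0$, and for each $t\in[0,1]$ let $g_t:\mathbb R\to\mathbb R$ satisfy $g_t(x)-g_t(y)\le\max(|e^{c_gx}-e^{c_gy}|,K_g|x-y|)$ for all $x,y$, and in addition $|g_t(x)-g_s(x)|\le K'_g|t-s|$ for all $x\in\mathbb R$, $s,t\in[0,1]$. Let $S_t=g_t(X_t)$. Then there is a constant $C_3$ independent of $s,t,\epsilon$ such that for all $\epsilon>0$ and $s,t\in[0,1]$, $$\mathbb E\big[(S_t-S_s)^2\big]\le C_3\Big(\big(L_X(\epsilon)+K_g'^2\big)(t-s)^2+\epsilon^2\Big).$$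
   Context: Standing setup: $(X_t)_{t\in[0,1]}$ is a centered stochastic process with $\mathbb E[X_t^2]<\infty$ whose covariance $k_X(s,t)=\mathbb E[X_sX_t]$ is continuous on $[0,1]^2$. Let $\mathcal K$ be the integral operator $(\mathcal Kf)(t)=\int_0^1k_X(s,t)f(s)\,ds$ on $L^2([0,1])$, with orthonormal eigenfunctions $(e_k)_{k\ge1}$ and eigenvalues $\lambda_1\ge\lambda_2\ge\dots\ge0$. The Karhunen–Loève (KL) expansion is $X_t=\sum_{k\ge1}Z_ke_k(t)$ with $Z_k=\int_0^1X_te_k(t)\,dt$, converging in $L^2(\mathbb P)$ uniformly in $t$; the $Z_k$ are centered and uncorrelated with $\mathbb E[Z_k^2]=\lambda_k$. The truncation index $L_X(\epsilon)$ is the smallest natural number $L$ such that $\mathbb E\big[(\sum_{k=1}^{L}Z_ke_k(t)-X_t)^2\big]\le\epsilon^2$ for all $t\in[0,1]$. A real random variable $W$ with mean $m$ is sub-Gaussian with parameter $s\ge0$ if $\mathbb E[\exp(\theta(W-m))]\le\exp(\theta^2s^2/2)$ for all $\theta\in\mathbb R$. *)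

theory Defs
  imports "HOL-Probability.Probability"
begin

definition cov_fun :: "'a measure \<Rightarrow> (real \<Rightarrow> 'a \<Rightarrow> real) \<Rightarrow> real \<Rightarrow> real \<Rightarrow> real" where
  "cov_fun M X s t = (\<integral>\<omega>. X s \<omega> * X t \<omega> \<partial>M)"

definition KL_coeff :: "(real \<Rightarrow> 'a \<Rightarrow> real) \<Rightarrow> (nat \<Rightarrow> real \<Rightarrow> real) \<Rightarrow> nat \<Rightarrow> 'a \<Rightarrow> real" where
  "KL_coeff X e k \<omega> = (LINT t:{0..1}|lborel. X t \<omega> * e k t)"

text \<open>Truncation index L_X(eps): smallest L with
  E[(sum_{k<L} Z_k e_k(t) - X_t)^2] <= eps^2 for all t in [0,1]
  (eigenfunctions indexed from 0, so this is the sum of the first L terms).\<close>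
definition KL_trunc_index ::
  "'a measure \<Rightarrow> (real \<Rightarrow> 'a \<Rightarrow> real) \<Rightarrow> (nat \<Rightarrow> real \<Rightarrow> real) \<Rightarrow> real \<Rightarrow> nat" where
  "KL_trunc_index M X e \<epsilon> = (LEAST L::nat. \<forall>t\<in>{0..1}.
      (\<integral>\<omega>. ((\<Sum>k<L. KL_coeff X e k \<omega> * e k t) - X t \<omega>)\<^sup>2 \<partial>M) \<le> \<epsilon>\<^sup>2)"

definition sub_gaussian :: "'a measure \<Rightarrow> ('a \<Rightarrow> real) \<Rightarrow> real \<Rightarrow> real \<Rightarrow> bool" where
  "sub_gaussian M W m s \<longleftrightarrow> W \<in> borel_measurable M \<and> integrable M W \<and> (\<integral>\<omega>. W \<omega> \<partial>M) = m \<and>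
     (\<forall>\<theta>::real. integrable M (\<lambda>\<omega>. exp (\<theta> * (W \<omega> - m))) \<and>
        (\<integral>\<omega>. exp (\<theta> * (W \<omega> - m)) \<partial>M) \<le> exp (\<theta>\<^sup>2 * s\<^sup>2 / 2))"

end

theory Submission
  imports Defs
begin


lemma pow_le_exp:
  fixes y :: real assumes "0 \<le> y" "n > 0"
  shows "(y / real n) ^ n \<le> exp y"
proof -
  have "exp y = exp (y / real n) ^ n"
    using assms by (simp add: exp_of_nat_mult[symmetric])
  moreover have "y / real n \<le> exp (y / real n)"
    by (smt (verit) exp_ge_add_one_self)
  moreover have "0 \<le> y / real n" using assms by simp
  ultimately show ?thesis by (simp add: power_mono)
qed

lemma sq_le_exp: "(x::real)\<^sup>2 \<le> 4 * (exp x + exp (- x))"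
proof -
  have "(\<bar>x\<bar> / real 2) ^ 2 \<le> exp \<bar>x\<bar>" by (rule pow_le_exp) auto
  hence "x\<^sup>2 \<le> 4 * exp \<bar>x\<bar>" by (simp add: power_divide)
  moreover have "exp \<bar>x\<bar> \<le> exp x + exp (-x)" by (cases "x \<ge> 0") auto
  ultimately show ?thesis by (smt (verit))
qed

lemma four_le_exp: "(x::real) ^ 4 \<le> 256 * (exp x + exp (- x))"
proof -
  have "(\<bar>x\<bar> / real 4) ^ 4 \<le> exp \<bar>x\<bar>" by (rule pow_le_exp) auto
  hence "\<bar>x\<bar>^4 \<le> 256 * exp \<bar>x\<bar>" by (simp add: power_divide)
  moreover have "\<bar>x\<bar>^4 = x^4" by (simp add: power_even_abs_numeral)
  moreover have "exp \<bar>x\<bar> \<le> exp x + exp (-x)" by (cases "x \<ge> 0") auto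
  ultimately show ?thesis by (smt (verit))
qed

lemma (in prob_space) L2_prod:
  fixes f g :: "'a \<Rightarrow> real"
  assumes "f \<in> borel_measurable M" "g \<in> borel_measurable M"
    "integrable M (\<lambda>x. (f x)\<^sup>2)" "integrable M (\<lambda>x. (g x)\<^sup>2)"
  shows "integrable M (\<lambda>x. f x * g x)"
proof (rule Bochner_Integration.integrable_bound[of _ "\<lambda>x. (f x)\<^sup>2 + (g x)\<^sup>2"])
  show "integrable M (\<lambda>x. (f x)\<^sup>2 + (g x)\<^sup>2)" using assms by auto
  show "(\<lambda>x. f x * g x) \<in> borel_measurable M" using assms by auto
  show "AE x in M. norm (f x * g x) \<le> norm ((f x)\<^sup>2 + (g x)\<^sup>2)"
  proof (intro AE_I2)
    fix x
    have "0 \<le> (\<bar>f x\<bar> - \<bar>g x\<bar>)\<^sup>2" by simp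
    hence "2 * (\<bar>f x\<bar> * \<bar>g x\<bar>) \<le> (f x)\<^sup>2 + (g x)\<^sup>2"
      by (simp add: power2_eq_square algebra_simps)
    moreover have "0 \<le> \<bar>f x\<bar> * \<bar>g x\<bar>" by simp
    moreover have "norm (f x * g x) = \<bar>f x\<bar> * \<bar>g x\<bar>" by (simp add: abs_mult)
    moreover have "norm ((f x)\<^sup>2 + (g x)\<^sup>2) = (f x)\<^sup>2 + (g x)\<^sup>2" by simp
    ultimately show "norm (f x * g x) \<le> norm ((f x)\<^sup>2 + (g x)\<^sup>2)"
      by linarith
  qed
qed



locale L4 = prob_space M for M :: "'a measure" +
  fixes X :: "real \<Rightarrow> 'a \<Rightarrow> real" and e :: "nat \<Rightarrow> real \<Rightarrow> real" and lam :: "nat \<Rightarrow> real"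
    and G :: "nat \<Rightarrow> real"
  assumes X_meas: "(\<lambda>(t, \<omega>). indicator {0..1} t * X t \<omega>) \<in> borel_measurable (lborel \<Otimes>\<^sub>M M)"
    and X_sq: "\<forall>t\<in>{0..1}. integrable M (\<lambda>\<omega>. (X t \<omega>)\<^sup>2)"
    and X_centered: "\<forall>t\<in>{0..1}. integrable M (X t) \<and> (\<integral>\<omega>. X t \<omega> \<partial>M) = 0"
    and cov_cont: "continuous_on ({0..1} \<times> {0..1}) (\<lambda>(s, t). cov_fun M X s t)"
    and e_meas: "\<forall>k. e k \<in> borel_measurable lborel"
    and e_orth: "\<forall>i j. set_integrable lborel {0..1} (\<lambda>s. e i s * e j s) \<and>
                   (LINT s:{0..1}|lborel. e i s * e j s) = (if i = j then 1 else 0)"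
    and e_eigen: "\<forall>k. \<forall>t\<in>{0..1}. set_integrable lborel {0..1} (\<lambda>s. cov_fun M X s t * e k s) \<and>
                   (LINT s:{0..1}|lborel. cov_fun M X s t * e k s) = lam k * e k t"
    and e_complete: "\<forall>f. f \<in> borel_measurable lborel \<longrightarrow>
                   set_integrable lborel {0..1} (\<lambda>s. (f s)\<^sup>2) \<longrightarrow>
                   (\<forall>k. (LINT s:{0..1}|lborel. f s * e k s) = 0) \<longrightarrow>
                   (\<forall>t\<in>{0..1}. (LINT s:{0..1}|lborel. cov_fun M X s t * f s) = 0)"
    and lam_nonneg: "\<forall>k. lam k \<ge> 0"
    and Z_indep: "indep_vars (\<lambda>_. borel) (KL_coeff X e) UNIV"
    and Z_subg: "\<forall>k. sub_gaussian M (KL_coeff X e k) 0 (sqrt (lam k))"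
    and e_lip: "\<forall>k. \<forall>x\<in>{0..1}. \<forall>y\<in>{0..1}. \<bar>e k x - e k y\<bar> \<le> G k * \<bar>x - y\<bar>"
begin

abbreviation "I \<equiv> {0..1::real}"
abbreviation "k \<equiv> cov_fun M X"
abbreviation "Z \<equiv> KL_coeff X e"

lemma em[measurable]: "e j \<in> borel_measurable borel"
  using e_meas by simp

lemma Xm[measurable]: "t \<in> I \<Longrightarrow> X t \<in> borel_measurable M"
  using X_centered by auto

lemma X2: "t \<in> I \<Longrightarrow> integrable M (\<lambda>\<omega>. (X t \<omega>)\<^sup>2)"
  using X_sq by auto

lemma XX_int: "s \<in> I \<Longrightarrow> t \<in> I \<Longrightarrow> integrable M (\<lambda>\<omega>. X s \<omega> * X t \<omega>)"
  by (rule L2_prod) (auto simp: X2)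

lemma k_sym: "k s t = k t s"
  unfolding cov_fun_def by (simp add: mult.commute)

lemma k_diag: "k t t = (\<integral>\<omega>. (X t \<omega>)\<^sup>2 \<partial>M)"
  unfolding cov_fun_def by (simp add: power2_eq_square)

lemma k_diag_nonneg: "k t t \<ge> 0"
  unfolding k_diag by simp

lemma abs_prod_le: "\<bar>(a::real) * b\<bar> \<le> (a\<^sup>2 + b\<^sup>2) / 2"
proof -
  have "0 \<le> (\<bar>a\<bar> - \<bar>b\<bar>)\<^sup>2" by simp
  thus ?thesis by (simp add: power2_eq_square algebra_simps abs_mult)
qed

lemma k_bound: assumes "s \<in> I" "t \<in> I" shows "\<bar>k s t\<bar> \<le> (k s s + k t t) / 2"
proof -
  have "\<bar>k s t\<bar> \<le> (\<integral>\<omega>. \<bar>X s \<omega> * X t \<omega>\<bar> \<partial>M)"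
    unfolding cov_fun_def by (rule integral_abs_bound)
  also have "\<dots> \<le> (\<integral>\<omega>. ((X s \<omega>)\<^sup>2 + (X t \<omega>)\<^sup>2) / 2 \<partial>M)"
  proof (rule integral_mono)
    show "integrable M (\<lambda>\<omega>. \<bar>X s \<omega> * X t \<omega>\<bar>)" using assms XX_int by auto
    show "integrable M (\<lambda>\<omega>. ((X s \<omega>)\<^sup>2 + (X t \<omega>)\<^sup>2) / 2)" using assms X2 by auto
    show "\<bar>X s \<omega> * X t \<omega>\<bar> \<le> ((X s \<omega>)\<^sup>2 + (X t \<omega>)\<^sup>2) / 2" for \<omega>
      by (rule abs_prod_le)
  qed
  also have "\<dots> = (k s s + k t t) / 2"
    using assms by (simp add: k_diag X2)
  finally show ?thesis .
qed

lemma k_cont_diag: "continuous_on I (\<lambda>t. k t t)"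
proof -
  have "continuous_on I ((\<lambda>(s, t). k s t) \<circ> (\<lambda>t. (t, t)))"
    by (rule continuous_on_compose) (auto intro!: continuous_intros continuous_on_subset[OF cov_cont])
  thus ?thesis by (simp add: o_def)
qed

lemma B_ex: "\<exists>B\<ge>0. \<forall>t\<in>I. k t t \<le> B"
proof -
  have "compact ((\<lambda>t. k t t) ` I)" by (rule compact_continuous_image[OF k_cont_diag]) simp
  then obtain B where "\<forall>x\<in>(\<lambda>t. k t t) ` I. norm x \<le> B" using compact_imp_bounded bounded_iff by metis
  moreover have "0 \<le> B" using calculation[rule_format, of "k 0 0"] by auto
  ultimately show ?thesis by force
qed

definition "B = (SOME B. B \<ge> 0 \<and> (\<forall>t\<in>I. k t t \<le> B))"

lemma B: "B \<ge> 0" "t \<in> I \<Longrightarrow> k t t \<le> B"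
  using someI_ex[OF B_ex] unfolding B_def by auto

lemma k_le_B: "s \<in> I \<Longrightarrow> t \<in> I \<Longrightarrow> \<bar>k s t\<bar> \<le> B"
  using k_bound[of s t] B(2)[of s] B(2)[of t] by auto

lemma Z_sg: "sub_gaussian M (Z j) 0 (sqrt (lam j))"
  using Z_subg by auto

lemma Zm[measurable]: "Z j \<in> borel_measurable M"
  using Z_sg unfolding sub_gaussian_def by auto

lemma Z2: "integrable M (\<lambda>\<omega>. (Z j \<omega>)\<^sup>2)"
proof (rule Bochner_Integration.integrable_bound[of _ "\<lambda>\<omega>. 4 * (exp (Z j \<omega>) + exp (- Z j \<omega>))"])
  have "integrable M (\<lambda>\<omega>. exp (1 * (Z j \<omega> - 0)))" "integrable M (\<lambda>\<omega>. exp ((-1) * (Z j \<omega> - 0)))"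
    using Z_sg unfolding sub_gaussian_def by blast+
  thus "integrable M (\<lambda>\<omega>. 4 * (exp (Z j \<omega>) + exp (- Z j \<omega>)))" by auto
  show "AE x in M. norm ((Z j x)\<^sup>2) \<le> norm (4 * (exp (Z j x) + exp (- Z j x)))"
    using sq_le_exp by (auto simp: add_pos_pos)
qed simp

lemma ej_sq: "set_integrable lborel I (\<lambda>s. (e j s)\<^sup>2)"
  using e_orth by (simp add: power2_eq_square)

lemma ej_int: "set_integrable lborel I (e j)"
proof -
  have i1: "integrable lborel (indicator I :: real \<Rightarrow> real)"
    by (simp add: integrable_indicator_iff)
  show ?thesis unfolding set_integrable_def
  proof (rule Bochner_Integration.integrable_bound[of _ "\<lambda>s. indicator I s + indicator I s *\<^sub>R (e j s)\<^sup>2"])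
    show "integrable lborel (\<lambda>s. indicator I s + indicator I s *\<^sub>R (e j s)\<^sup>2)"
      using i1 ej_sq unfolding set_integrable_def by auto
    show "(\<lambda>x. indicator I x *\<^sub>R e j x) \<in> borel_measurable lborel" by simp
    show "AE x in lborel. norm (indicator I x *\<^sub>R e j x) \<le> norm (indicator I x + indicator I x *\<^sub>R (e j x)\<^sup>2)"
    proof (intro AE_I2)
      fix x have "\<bar>e j x\<bar> \<le> 1 + (e j x)\<^sup>2" using abs_prod_le[of 1 "e j x"] by simp
      thus "norm (indicator I x *\<^sub>R e j x) \<le> norm (indicator I x + indicator I x *\<^sub>R (e j x)\<^sup>2)"
        by (auto simp: indicator_def)
    qed
  qed
qed

end


context L4 begin

lemma pair_sf: "pair_sigma_finite lborel M"
  by (intro pair_sigma_finite.intro lborel.sigma_finite_measure_axioms sigma_finite_measure_axioms)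

lemma fub:
  assumes Wm[measurable]: "W \<in> borel_measurable M" and W2: "integrable M (\<lambda>\<omega>. (W \<omega>)\<^sup>2)"
  shows "integrable M (\<lambda>\<omega>. W \<omega> * Z j \<omega>)"
    and "set_integrable lborel I (\<lambda>u. (\<integral>\<omega>. W \<omega> * X u \<omega> \<partial>M) * e j u)"
    and "(\<integral>\<omega>. W \<omega> * Z j \<omega> \<partial>M) = (LINT u:I|lborel. (\<integral>\<omega>. W \<omega> * X u \<omega> \<partial>M) * e j u)"
proof -
  interpret P: pair_sigma_finite lborel M by (rule pair_sf)
  define XI where "XI = (\<lambda>(t, \<omega>). indicator {0..1} t * X t \<omega>)"
  have XIm[measurable]: "XI \<in> borel_measurable (lborel \<Otimes>\<^sub>M M)" using X_meas unfolding XI_def .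
  define F where "F = (\<lambda>u \<omega>. indicator I u * (X u \<omega> * e j u) * W \<omega>)"
  have F_eq: "case_prod F = (\<lambda>x. XI x * e j (fst x) * W (snd x))"
    by (auto simp: F_def XI_def fun_eq_iff)
  have Fm: "case_prod F \<in> borel_measurable (lborel \<Otimes>\<^sub>M M)"
    unfolding F_eq by measurable
  have XW: "u \<in> I \<Longrightarrow> integrable M (\<lambda>\<omega>. X u \<omega> * W \<omega>)" for u
    by (rule L2_prod) (auto simp: X2 W2)
  define EW where "EW = (\<integral>\<omega>. (W \<omega>)\<^sup>2 \<partial>M)"
  have normF: "(\<integral>\<omega>. norm (case_prod F (u, \<omega>)) \<partial>M) = indicator I u * \<bar>e j u\<bar> * (\<integral>\<omega>. \<bar>X u \<omega> * W \<omega>\<bar> \<partial>M)" for u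
  proof (cases "u \<in> I")
    case True
    have "norm (case_prod F (u, \<omega>)) = \<bar>e j u\<bar> * \<bar>X u \<omega> * W \<omega>\<bar>" for \<omega>
      using True by (simp add: F_def abs_mult)
    thus ?thesis using True by simp
  qed (simp add: F_def)
  have absXW: "u \<in> I \<Longrightarrow> (\<integral>\<omega>. \<bar>X u \<omega> * W \<omega>\<bar> \<partial>M) \<le> (B + EW) / 2" for u
  proof -
    assume u: "u \<in> I"
    have "(\<integral>\<omega>. \<bar>X u \<omega> * W \<omega>\<bar> \<partial>M) \<le> (\<integral>\<omega>. ((X u \<omega>)\<^sup>2 + (W \<omega>)\<^sup>2) / 2 \<partial>M)"
    proof (rule integral_mono)
      show "integrable M (\<lambda>\<omega>. \<bar>X u \<omega> * W \<omega>\<bar>)" using XW[OF u] by auto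
      show "integrable M (\<lambda>\<omega>. ((X u \<omega>)\<^sup>2 + (W \<omega>)\<^sup>2) / 2)" using u X2 W2 by auto
    qed (rule abs_prod_le)
    also have "\<dots> = (k u u + EW) / 2" using u X2 W2 by (simp add: k_diag EW_def)
    also have "\<dots> \<le> (B + EW) / 2" using B(2)[OF u] by simp
    finally show ?thesis .
  qed
  have intF: "integrable (lborel \<Otimes>\<^sub>M M) (case_prod F)"
  proof (rule P.Fubini_integrable[OF Fm])
    show "AE x in lborel. integrable M (\<lambda>y. case_prod F (x, y))"
    proof (intro AE_I2)
      fix u show "integrable M (\<lambda>y. case_prod F (u, y))"
      proof (cases "u \<in> I")
        case True
        have "integrable M (\<lambda>y. (X u y * W y) * e j u)" using XW[OF True] by auto
        moreover have "case_prod F (u, y) = (X u y * W y) * e j u" for y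
          using True by (simp add: F_def)
        ultimately show ?thesis by simp
      next
        case False thus ?thesis by (simp add: F_def)
      qed
    qed
    show "integrable lborel (\<lambda>x. \<integral>y. norm (case_prod F (x, y)) \<partial>M)"
    proof (rule Bochner_Integration.integrable_bound[of _ "\<lambda>u. indicator I u * \<bar>e j u\<bar> * ((B + EW) / 2)"])
      show "integrable lborel (\<lambda>u. indicator I u * \<bar>e j u\<bar> * ((B + EW) / 2))"
        using ej_int[of j] unfolding set_integrable_def
        by (intro integrable_mult_left) (auto dest: integrable_abs simp: abs_mult)
      show "(\<lambda>x. \<integral>y. norm (case_prod F (x, y)) \<partial>M) \<in> borel_measurable lborel"
        using Fm by measurable
      show "AE x in lborel. norm (\<integral>y. norm (case_prod F (x, y)) \<partial>M) \<le> norm (indicator I x * \<bar>e j x\<bar> * ((B + EW) / 2))"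
      proof (intro AE_I2)
        fix u
        have EWn: "EW \<ge> 0" unfolding EW_def by simp
        show "norm (\<integral>y. norm (case_prod F (u, y)) \<partial>M) \<le> norm (indicator I u * \<bar>e j u\<bar> * ((B + EW) / 2))"
        proof (cases "u \<in> I")
          case True
          have "0 \<le> (\<integral>\<omega>. \<bar>X u \<omega> * W \<omega>\<bar> \<partial>M)" by simp
          then show ?thesis unfolding normF using True absXW[OF True] B(1) EWn
            using mult_left_mono[OF absXW[OF True], of "\<bar>e j u\<bar>"] by simp
        qed (simp add: F_def)
      qed
    qed
  qed
  have inner1: "(\<integral>u. F u \<omega> \<partial>lborel) = W \<omega> * Z j \<omega>" for \<omega>
    unfolding F_def KL_coeff_def set_lebesgue_integral_def by (simp add: mult.commute)
  have inner2: "(\<integral>\<omega>. F u \<omega> \<partial>M) = indicator I u *\<^sub>R ((\<integral>\<omega>. W \<omega> * X u \<omega> \<partial>M) * e j u)" for u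
  proof -
    have "(\<lambda>\<omega>. F u \<omega>) = (\<lambda>\<omega>. (indicator I u * e j u) * (W \<omega> * X u \<omega>))"
      by (auto simp: F_def fun_eq_iff)
    thus ?thesis by simp
  qed
  show "integrable M (\<lambda>\<omega>. W \<omega> * Z j \<omega>)"
    using P.integrable_snd[OF intF] unfolding inner1 .
  show "set_integrable lborel I (\<lambda>u. (\<integral>\<omega>. W \<omega> * X u \<omega> \<partial>M) * e j u)"
    using P.integrable_fst[OF intF] unfolding inner2 set_integrable_def .
  show "(\<integral>\<omega>. W \<omega> * Z j \<omega> \<partial>M) = (LINT u:I|lborel. (\<integral>\<omega>. W \<omega> * X u \<omega> \<partial>M) * e j u)"
    using P.Fubini_integral[OF intF] unfolding inner1 inner2 set_lebesgue_integral_def .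
qed

end


context L4 begin

lemma EXZ: assumes t: "t \<in> I"
  shows "integrable M (\<lambda>\<omega>. X t \<omega> * Z j \<omega>)" "(\<integral>\<omega>. X t \<omega> * Z j \<omega> \<partial>M) = lam j * e j t"
proof -
  show "integrable M (\<lambda>\<omega>. X t \<omega> * Z j \<omega>)" using t by (intro fub(1) Xm X2)
  have "(\<integral>\<omega>. X t \<omega> * Z j \<omega> \<partial>M) = (LINT u:I|lborel. (\<integral>\<omega>. X t \<omega> * X u \<omega> \<partial>M) * e j u)"
    using t by (intro fub(3) Xm X2)
  also have "\<dots> = (LINT u:I|lborel. k u t * e j u)"
    by (simp add: cov_fun_def[symmetric] k_sym[of t])
  also have "\<dots> = lam j * e j t" using e_eigen t by auto
  finally show "(\<integral>\<omega>. X t \<omega> * Z j \<omega> \<partial>M) = lam j * e j t" .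
qed

lemma EZZ: "integrable M (\<lambda>\<omega>. Z i \<omega> * Z j \<omega>)"
  "(\<integral>\<omega>. Z i \<omega> * Z j \<omega> \<partial>M) = (if i = j then lam j else 0)"
proof -
  show "integrable M (\<lambda>\<omega>. Z i \<omega> * Z j \<omega>)" by (rule fub(1)) (auto simp: Z2)
  have "(\<integral>\<omega>. Z i \<omega> * Z j \<omega> \<partial>M) = (LINT u:I|lborel. (\<integral>\<omega>. Z i \<omega> * X u \<omega> \<partial>M) * e j u)"
    by (rule fub(3)) (auto simp: Z2)
  also have "\<dots> = (LINT u:I|lborel. lam i * (e i u * e j u))"
  proof (rule set_lebesgue_integral_cong)
    show "\<forall>u. u \<in> I \<longrightarrow> (\<integral>\<omega>. Z i \<omega> * X u \<omega> \<partial>M) * e j u = lam i * (e i u * e j u)"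
      using EXZ(2) by (auto simp: mult.commute)
  qed simp
  also have "\<dots> = (if i = j then lam j else 0)" using e_orth by auto
  finally show "(\<integral>\<omega>. Z i \<omega> * Z j \<omega> \<partial>M) = (if i = j then lam j else 0)" .
qed

lemma sumZ_m[measurable]: "(\<lambda>\<omega>. \<Sum>k\<in>F. Z k \<omega> * a k) \<in> borel_measurable M"
  by measurable

lemma sumZ_sq:
  assumes "finite F"
  shows "integrable M (\<lambda>\<omega>. (\<Sum>k\<in>F. Z k \<omega> * a k)\<^sup>2)"
    "(\<integral>\<omega>. (\<Sum>k\<in>F. Z k \<omega> * a k)\<^sup>2 \<partial>M) = (\<Sum>k\<in>F. lam k * (a k)\<^sup>2)"
proof -
  have eq: "(\<Sum>k\<in>F. Z k \<omega> * a k)\<^sup>2 = (\<Sum>i\<in>F. \<Sum>j\<in>F. (a i * a j) * (Z i \<omega> * Z j \<omega>))" for \<omega>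
    by (simp add: power2_eq_square sum_product algebra_simps)
  show "integrable M (\<lambda>\<omega>. (\<Sum>k\<in>F. Z k \<omega> * a k)\<^sup>2)"
    unfolding eq by (intro Bochner_Integration.integrable_sum integrable_mult_right EZZ(1))
  have "(\<integral>\<omega>. (\<Sum>k\<in>F. Z k \<omega> * a k)\<^sup>2 \<partial>M) = (\<Sum>i\<in>F. \<Sum>j\<in>F. (a i * a j) * (if i = j then lam j else 0))"
    unfolding eq by (simp add: integral_sum integrable_sum EZZ)
  also have "\<dots> = (\<Sum>k\<in>F. lam k * (a k)\<^sup>2)"
    using assms by (simp add: power2_eq_square algebra_simps if_distrib sum.delta cong: if_cong)
  finally show "(\<integral>\<omega>. (\<Sum>k\<in>F. Z k \<omega> * a k)\<^sup>2 \<partial>M) = (\<Sum>k\<in>F. lam k * (a k)\<^sup>2)" .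
qed

lemma proj:
  assumes Wm[measurable]: "W \<in> borel_measurable M" and W2: "integrable M (\<lambda>\<omega>. (W \<omega>)\<^sup>2)"
    and F: "finite F" and WZ: "\<And>j. j \<in> F \<Longrightarrow> (\<integral>\<omega>. W \<omega> * Z j \<omega> \<partial>M) = lam j * a j"
  shows "integrable M (\<lambda>\<omega>. ((\<Sum>k\<in>F. Z k \<omega> * a k) - W \<omega>)\<^sup>2)"
    "(\<integral>\<omega>. ((\<Sum>k\<in>F. Z k \<omega> * a k) - W \<omega>)\<^sup>2 \<partial>M) = (\<integral>\<omega>. (W \<omega>)\<^sup>2 \<partial>M) - (\<Sum>k\<in>F. lam k * (a k)\<^sup>2)"
proof -
  have eq: "((\<Sum>k\<in>F. Z k \<omega> * a k) - W \<omega>)\<^sup>2 = (\<Sum>k\<in>F. Z k \<omega> * a k)\<^sup>2 - 2 * (\<Sum>k\<in>F. a k * (W \<omega> * Z k \<omega>)) + (W \<omega>)\<^sup>2" for \<omega>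
    by (simp add: power2_eq_square sum_distrib_left algebra_simps)
  have iWZ: "integrable M (\<lambda>\<omega>. W \<omega> * Z j \<omega>)" for j by (rule fub(1)[OF Wm W2])
  have iS: "integrable M (\<lambda>\<omega>. (\<Sum>k\<in>F. a k * (W \<omega> * Z k \<omega>)))"
    by (intro Bochner_Integration.integrable_sum integrable_mult_right iWZ)
  show "integrable M (\<lambda>\<omega>. ((\<Sum>k\<in>F. Z k \<omega> * a k) - W \<omega>)\<^sup>2)"
    unfolding eq using sumZ_sq(1)[OF F] iS W2 by auto
  have "(\<integral>\<omega>. ((\<Sum>k\<in>F. Z k \<omega> * a k) - W \<omega>)\<^sup>2 \<partial>M)
      = (\<Sum>k\<in>F. lam k * (a k)\<^sup>2) - 2 * (\<Sum>k\<in>F. a k * (lam k * a k)) + (\<integral>\<omega>. (W \<omega>)\<^sup>2 \<partial>M)"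
    unfolding eq using sumZ_sq[OF F] iS W2 iWZ
    by (simp add: integral_sum integrable_sum WZ)
  also have "\<dots> = (\<integral>\<omega>. (W \<omega>)\<^sup>2 \<partial>M) - (\<Sum>k\<in>F. lam k * (a k)\<^sup>2)"
    by (simp add: power2_eq_square algebra_simps)
  finally show "(\<integral>\<omega>. ((\<Sum>k\<in>F. Z k \<omega> * a k) - W \<omega>)\<^sup>2 \<partial>M) = (\<integral>\<omega>. (W \<omega>)\<^sup>2 \<partial>M) - (\<Sum>k\<in>F. lam k * (a k)\<^sup>2)" .
qed

definition R :: "nat \<Rightarrow> real \<Rightarrow> real" where
  "R L t = (\<integral>\<omega>. ((\<Sum>k<L. Z k \<omega> * e k t) - X t \<omega>)\<^sup>2 \<partial>M)"

lemma R_eq: "t \<in> I \<Longrightarrow> R L t = k t t - (\<Sum>k<L. lam k * (e k t)\<^sup>2)"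
  unfolding R_def k_diag
  by (rule proj(2)) (auto simp: X2 EXZ)

lemma R_int: "t \<in> I \<Longrightarrow> integrable M (\<lambda>\<omega>. ((\<Sum>k<L. Z k \<omega> * e k t) - X t \<omega>)\<^sup>2)"
  by (rule proj(1)) (auto simp: X2 EXZ)

lemma R_nonneg: "R L t \<ge> 0"
  unfolding R_def by simp

lemma bessel: "t \<in> I \<Longrightarrow> (\<Sum>k<L. lam k * (e k t)\<^sup>2) \<le> k t t"
  using R_eq[of t L] R_nonneg[of L t] by simp

end


lemma cont_bounded: assumes "continuous_on {0..1::real} f" shows "\<exists>C\<ge>0. \<forall>s\<in>{0..1}. \<bar>f s :: real\<bar> \<le> C"
proof -
  have "compact (f ` {0..1})" by (rule compact_continuous_image[OF assms]) simp
  then obtain C where "\<forall>x\<in>f ` {0..1}. norm x \<le> C" using compact_imp_bounded bounded_iff by metis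
  moreover have "0 \<le> C" using calculation[rule_format, of "f 0"] by auto
  ultimately show ?thesis by force
qed

lemma cont_meas: assumes "continuous_on {0..1::real} f"
  shows "(\<lambda>s. indicator {0..1} s * f s :: real) \<in> borel_measurable lborel"
  using borel_measurable_continuous_on_indicator[OF _ assms] by simp

lemma cont_mult_int:
  assumes f: "continuous_on {0..1::real} f" and h: "set_integrable lborel {0..1} h"
  shows "set_integrable lborel {0..1} (\<lambda>s. f s * h s :: real)"
proof -
  obtain C where C: "C \<ge> 0" "\<forall>s\<in>{0..1}. \<bar>f s\<bar> \<le> C" using cont_bounded[OF f] by blast
  have hm: "(\<lambda>s. indicator {0..1} s *\<^sub>R h s) \<in> borel_measurable lborel"
    using h unfolding set_integrable_def by auto
  have hi: "integrable lborel (\<lambda>s. C * \<bar>indicator {0..1} s *\<^sub>R h s\<bar>)"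
    using h unfolding set_integrable_def by auto
  show ?thesis unfolding set_integrable_def
  proof (rule Bochner_Integration.integrable_bound[OF hi])
    have "(\<lambda>s. (indicator {0..1} s * f s) * (indicator {0..1} s *\<^sub>R h s)) \<in> borel_measurable lborel"
      using cont_meas[OF f] hm by measurable
    moreover have "(\<lambda>s. (indicator {0..1} s * f s) * (indicator {0..1} s *\<^sub>R h s)) = (\<lambda>s. indicator {0..1} s *\<^sub>R (f s * h s))"
      by (auto simp: fun_eq_iff indicator_def)
    ultimately show "(\<lambda>s. indicator {0..1} s *\<^sub>R (f s * h s)) \<in> borel_measurable lborel" by simp
    show "AE x in lborel. norm (indicator {0..1} x *\<^sub>R (f x * h x)) \<le> norm (C * \<bar>indicator {0..1} x *\<^sub>R h x\<bar>)"
    proof (intro AE_I2)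
      fix x show "norm (indicator {0..1} x *\<^sub>R (f x * h x)) \<le> norm (C * \<bar>indicator {0..1} x *\<^sub>R h x\<bar>)"
        using C mult_right_mono[OF C(2)[rule_format, of x] abs_ge_zero[of "h x"]]
        by (auto simp: indicator_def abs_mult)
    qed
  qed
qed

lemma set_abs_int: fixes f :: "_ \<Rightarrow> real" assumes fi: "set_integrable M A f"
  shows "\<bar>LINT x:A|M. f x\<bar> \<le> (LINT x:A|M. \<bar>f x\<bar>)"
proof -
  have m: "set_integrable M A (\<lambda>x. - f x)" using set_integrable_mult_right[of "-1" M A f] fi by simp
  have a: "(LINT x:A|M. f x) \<le> (LINT x:A|M. \<bar>f x\<bar>)"
    by (rule set_integral_mono[OF fi set_integrable_abs[OF fi]]) simp
  have b: "(LINT x:A|M. - f x) \<le> (LINT x:A|M. \<bar>f x\<bar>)"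
    by (rule set_integral_mono[OF m set_integrable_abs[OF fi]]) simp
  show ?thesis using a b set_integral_uminus[OF fi] by linarith
qed

lemma int_diff_bound:
  fixes g1 g2 h :: "real \<Rightarrow> real"
  assumes g1: "continuous_on {0..1::real} g1" and g2: "continuous_on {0..1::real} g2"
    and h: "set_integrable lborel {0..1} h" and d: "\<forall>s\<in>{0..1}. \<bar>g1 s - g2 s\<bar> \<le> \<delta>"
  shows "\<bar>(LINT s:{0..1}|lborel. g1 s * h s) - (LINT s:{0..1}|lborel. g2 s * h s)\<bar>
     \<le> \<delta> * (LINT s:{0..1}|lborel. \<bar>h s\<bar>)"
proof -
  have i1: "set_integrable lborel {0..1} (\<lambda>s. g1 s * h s)" by (rule cont_mult_int[OF g1 h])
  have i2: "set_integrable lborel {0..1} (\<lambda>s. g2 s * h s)" by (rule cont_mult_int[OF g2 h])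
  have g12: "continuous_on {0..1} (\<lambda>s. g1 s - g2 s)" using g1 g2 by (intro continuous_intros)
  have i3: "set_integrable lborel {0..1} (\<lambda>s. (g1 s - g2 s) * h s)" by (rule cont_mult_int[OF g12 h])
  have "(LINT s:{0..1}|lborel. g1 s * h s) - (LINT s:{0..1}|lborel. g2 s * h s)
      = (LINT s:{0..1}|lborel. (g1 s - g2 s) * h s)"
    using set_integral_diff(2)[OF i1 i2] by (simp add: algebra_simps)
  also have "\<bar>\<dots>\<bar> \<le> (LINT s:{0..1}|lborel. \<bar>(g1 s - g2 s) * h s\<bar>)" by (rule set_abs_int[OF i3])
  also have "\<dots> \<le> (LINT s:{0..1}|lborel. \<delta> * \<bar>h s\<bar>)"
  proof (rule set_integral_mono)
    show "set_integrable lborel {0..1} (\<lambda>s. \<bar>(g1 s - g2 s) * h s\<bar>)" by (rule set_integrable_abs[OF i3])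
    show "set_integrable lborel {0..1} (\<lambda>s. \<delta> * \<bar>h s\<bar>)"
      using set_integrable_mult_right[OF set_integrable_abs[OF h], of \<delta>] by (cases "\<delta> = 0") (auto simp: set_integrable_def)
    show "\<bar>(g1 x - g2 x) * h x\<bar> \<le> \<delta> * \<bar>h x\<bar>" if "x \<in> {0..1}" for x
      using d that by (simp add: abs_mult mult_right_mono)
  qed
  also have "\<dots> = \<delta> * (LINT s:{0..1}|lborel. \<bar>h s\<bar>)" by simp
  finally show ?thesis .
qed

lemma unif_int:
  fixes fN :: "nat \<Rightarrow> real \<Rightarrow> real" and f h :: "real \<Rightarrow> real"
  assumes ul: "uniform_limit {0..1::real} fN f sequentially"
    and fc: "\<And>N. continuous_on {0..1} (fN N)" and c: "continuous_on {0..1} f"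
    and h: "set_integrable lborel {0..1} h"
  shows "(\<lambda>N. LINT s:{0..1}|lborel. fN N s * h s) \<longlonglongrightarrow> (LINT s:{0..1}|lborel. f s * h s)"
proof (rule LIMSEQ_I)
  fix r :: real assume r: "0 < r"
  define A where "A = (LINT s:{0..1}|lborel. \<bar>h s\<bar>)"
  have A0: "A \<ge> 0" unfolding A_def set_lebesgue_integral_def by (intro integral_nonneg_AE) (auto simp: indicator_def)
  have "r / (A + 1) > 0" using r A0 by simp
  then obtain N0 where N0: "\<forall>n\<ge>N0. \<forall>x\<in>{0..1}. dist (fN n x) (f x) < r / (A + 1)"
    using ul unfolding uniform_limit_sequentially_iff by blast
  show "\<exists>no. \<forall>n\<ge>no. norm ((LINT s:{0..1}|lborel. fN n s * h s) - (LINT s:{0..1}|lborel. f s * h s)) < r"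
  proof (intro exI allI impI)
    fix n assume n: "n \<ge> N0"
    have "\<bar>(LINT s:{0..1}|lborel. fN n s * h s) - (LINT s:{0..1}|lborel. f s * h s)\<bar> \<le> r / (A + 1) * A"
      unfolding A_def using N0 n by (intro int_diff_bound fc c h) (auto simp: dist_real_def less_imp_le A_def[symmetric])
    also have "\<dots> < r" using r A0 by (simp add: field_simps)
    finally show "norm ((LINT s:{0..1}|lborel. fN n s * h s) - (LINT s:{0..1}|lborel. f s * h s)) < r" by simp
  qed
qed

lemma cont_zero:
  fixes g :: "real \<Rightarrow> real"
  assumes c: "continuous_on {0..1::real} g" and nn: "\<And>x. x \<in> {0..1} \<Longrightarrow> g x \<ge> 0"
    and i: "set_integrable lborel {0..1} g" and z: "(LINT s:{0..1}|lborel. g s) = 0"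
    and x: "x \<in> {0..1}"
  shows "g x = 0"
proof -
  have "integral {0..1} g = 0" using set_borel_integral_eq_integral(2)[OF i] z by simp
  hence "integral (cbox 0 1) g = 0" by simp
  hence "\<forall>x\<in>cbox 0 1. g x = 0"
    using integral_cbox_eq_0_iff[of 0 1 g] c nn by simp
  thus ?thesis using x by simp
qed

lemma dini:
  fixes f :: "nat \<Rightarrow> real \<Rightarrow> real"
  assumes c: "\<And>L. continuous_on {0..1} (f L)"
    and mono: "\<And>L L' t. L \<le> L' \<Longrightarrow> t \<in> {0..1} \<Longrightarrow> f L' t \<le> f L t"
    and lim: "\<And>t. t \<in> {0..1} \<Longrightarrow> \<exists>L. f L t < r"
  shows "\<exists>L. \<forall>t\<in>{0..1}. f L t < r"
proof -
  have "\<exists>A. open A \<and> A \<inter> {0..1} = f L -` {..<r} \<inter> {0..1}" for L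
    using c[of L] unfolding continuous_on_open_invariant by (meson open_lessThan)
  then obtain A where A: "\<And>L. open (A L)" "\<And>L. A L \<inter> {0..1} = f L -` {..<r} \<inter> {0..1}" by metis
  have cov: "{0..1} \<subseteq> (\<Union>L\<in>UNIV. A L)"
  proof
    fix t :: real assume t: "t \<in> {0..1}"
    then obtain L where "f L t < r" using lim by blast
    hence "t \<in> A L \<inter> {0..1}" using A(2)[of L] t by auto
    thus "t \<in> (\<Union>L\<in>UNIV. A L)" by auto
  qed
  obtain C where C: "finite C" "{0..1} \<subseteq> (\<Union>L\<in>C. A L)"
    using compactE_image[OF compact_Icc[of 0 1] _ cov] A(1) by metis
  define L0 where "L0 = Max (insert 0 C)"
  have "\<forall>t\<in>{0..1}. f L0 t < r"
  proof
    fix t :: real assume t: "t \<in> {0..1}"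
    then obtain L where L: "L \<in> C" "t \<in> A L" using C by auto
    hence "f L t < r" using A(2)[of L] t by auto
    moreover have "L \<le> L0" unfolding L0_def using L C by auto
    ultimately show "f L0 t < r" using mono[of L L0 t] t by linarith
  qed
  thus ?thesis by blast
qed



lemma amgm_w: assumes "d > 0" shows "\<bar>(x::real) * y\<bar> \<le> d / 2 * x\<^sup>2 + y\<^sup>2 / (2 * d)"
proof -
  have "0 \<le> (d * \<bar>x\<bar> - \<bar>y\<bar>)\<^sup>2" by simp
  hence "2 * d * \<bar>x * y\<bar> \<le> d\<^sup>2 * x\<^sup>2 + y\<^sup>2" by (simp add: power2_eq_square algebra_simps abs_mult)
  hence "\<bar>x * y\<bar> \<le> (d\<^sup>2 * x\<^sup>2 + y\<^sup>2) / (2 * d)" using assms by (simp add: field_simps)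
  also have "\<dots> = d / 2 * x\<^sup>2 + y\<^sup>2 / (2 * d)" using assms by (simp add: field_simps power2_eq_square)
  finally show ?thesis .
qed

context L4 begin

lemma e_cont: "continuous_on I (e j)"
  unfolding continuous_on_iff
proof (intro ballI allI impI)
  fix x r :: real assume x: "x \<in> I" and r: "0 < r"
  show "\<exists>d>0. \<forall>x'\<in>I. dist x' x < d \<longrightarrow> dist (e j x') (e j x) < r"
  proof (intro exI[of _ "r / (\<bar>G j\<bar> + 1)"] conjI ballI impI)
    show "0 < r / (\<bar>G j\<bar> + 1)" using r by simp
    fix x' assume x': "x' \<in> I" and d: "dist x' x < r / (\<bar>G j\<bar> + 1)"
    have "\<bar>e j x' - e j x\<bar> \<le> G j * \<bar>x' - x\<bar>" using e_lip x x' by blast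
    also have "\<dots> \<le> \<bar>G j\<bar> * \<bar>x' - x\<bar>" by (simp add: mult_right_mono)
    also have "\<dots> \<le> \<bar>G j\<bar> * (r / (\<bar>G j\<bar> + 1))"
    proof -
      have "\<bar>x' - x\<bar> \<le> r / (\<bar>G j\<bar> + 1)" using d by (simp add: dist_real_def)
      from mult_left_mono[OF this abs_ge_zero] show ?thesis .
    qed
    also have "\<dots> < r" using r by (simp add: field_simps)
    finally show "dist (e j x') (e j x) < r" by (simp add: dist_real_def)
  qed
qed

lemma k_cont1: "t \<in> I \<Longrightarrow> continuous_on I (\<lambda>s. k s t)"
proof -
  assume t: "t \<in> I"
  have "continuous_on I ((\<lambda>(s, t). k s t) \<circ> (\<lambda>s. (s, t)))"
    using t by (intro continuous_on_compose) (auto intro!: continuous_intros continuous_on_subset[OF cov_cont])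
  thus ?thesis by (simp add: o_def)
qed

lemma summ: "t \<in> I \<Longrightarrow> summable (\<lambda>j. lam j * (e j t)\<^sup>2)"
  by (rule summableI_nonneg_bounded[where x="k t t"]) (auto simp: lam_nonneg bessel)

lemma tail_le: "t \<in> I \<Longrightarrow> (\<Sum>m. lam (m + n) * (e (m + n) t)\<^sup>2) \<le> B"
proof -
  assume t: "t \<in> I"
  have "(\<Sum>m. lam (m + n) * (e (m + n) t)\<^sup>2) = (\<Sum>j. lam j * (e j t)\<^sup>2) - (\<Sum>j<n. lam j * (e j t)\<^sup>2)"
    using suminf_minus_initial_segment[OF summ[OF t]] by simp
  also have "\<dots> \<le> (\<Sum>j. lam j * (e j t)\<^sup>2)"
    using lam_nonneg by (simp add: sum_nonneg)
  also have "\<dots> \<le> k t t" by (rule suminf_le_const[OF summ[OF t]], rule bessel[OF t])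
  also have "\<dots> \<le> B" using B(2)[OF t] .
  finally show ?thesis .
qed

definition Kn :: "real \<Rightarrow> nat \<Rightarrow> real \<Rightarrow> real" where
  "Kn t N s = (\<Sum>j<N. lam j * e j t * e j s)"
definition Kinf :: "real \<Rightarrow> real \<Rightarrow> real" where
  "Kinf t s = (\<Sum>j. lam j * e j t * e j s)"
definition Tl :: "real \<Rightarrow> nat \<Rightarrow> real" where
  "Tl t n = (\<Sum>m. lam (m + n) * (e (m + n) t)\<^sup>2)"

lemma term_bound: "d > 0 \<Longrightarrow> \<bar>lam j * e j t * e j s\<bar> \<le> d / 2 * (lam j * (e j s)\<^sup>2) + (lam j * (e j t)\<^sup>2) / (2 * d)"
proof -
  assume d: "d > 0"
  have "\<bar>lam j * e j t * e j s\<bar> = lam j * \<bar>e j s * e j t\<bar>" using lam_nonneg by (simp add: abs_mult)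
  also have "\<dots> \<le> lam j * (d / 2 * (e j s)\<^sup>2 + (e j t)\<^sup>2 / (2 * d))"
    using amgm_w[OF d] lam_nonneg by (simp add: mult_left_mono)
  also have "\<dots> = d / 2 * (lam j * (e j s)\<^sup>2) + (lam j * (e j t)\<^sup>2) / (2 * d)" by (simp add: algebra_simps)
  finally show ?thesis .
qed

lemma Ksumm: assumes t: "t \<in> I" and s: "s \<in> I" shows "summable (\<lambda>j. lam j * e j t * e j s)"
proof (rule summable_comparison_test'[where N=0])
  show "summable (\<lambda>j. 1 / 2 * (lam j * (e j s)\<^sup>2) + (lam j * (e j t)\<^sup>2) / (2 * 1))"
    using summ[OF t] summ[OF s] by (intro summable_add summable_mult summable_divide)
  show "norm (lam j * e j t * e j s) \<le> 1 / 2 * (lam j * (e j s)\<^sup>2) + (lam j * (e j t)\<^sup>2) / (2 * 1)" for j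
    using term_bound[of 1 j t s] by simp
qed

lemma Kdiff_bound:
  assumes t: "t \<in> I" and s: "s \<in> I" and d: "d > 0"
  shows "\<bar>Kinf t s - Kn t n s\<bar> \<le> d / 2 * B + Tl t n / (2 * d)"
proof -
  let ?a = "\<lambda>j. lam j * e j t * e j s"
  let ?b = "\<lambda>j. d / 2 * (lam j * (e j s)\<^sup>2) + (lam j * (e j t)\<^sup>2) / (2 * d)"
  have sa: "summable ?a" by (rule Ksumm[OF t s])
  have sb: "summable ?b" using summ[OF t] summ[OF s] by (intro summable_add summable_mult summable_divide)
  have "Kinf t s - Kn t n s = (\<Sum>m. ?a (m + n))"
    unfolding Kinf_def Kn_def using suminf_split_initial_segment[OF sa, of n] by simp
  also have "\<bar>\<dots>\<bar> \<le> (\<Sum>m. \<bar>?a (m + n)\<bar>)"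
  proof (rule summable_rabs)
    have sb': "summable (\<lambda>m. ?b (m + n))" by (rule summable_ignore_initial_segment[OF sb])
    have tb: "\<And>m. \<bar>?a (m + n)\<bar> \<le> ?b (m + n)" by (rule term_bound[OF d])
    show "summable (\<lambda>m. \<bar>?a (m + n)\<bar>)"
      by (rule summable_comparison_test'[where N=0, OF sb']) (use tb in auto)
  qed
  also have "\<dots> \<le> (\<Sum>m. ?b (m + n))"
  proof -
    have sb': "summable (\<lambda>m. ?b (m + n))" by (rule summable_ignore_initial_segment[OF sb])
    have tb: "\<And>m. \<bar>?a (m + n)\<bar> \<le> ?b (m + n)" by (rule term_bound[OF d])
    have sa': "summable (\<lambda>m. \<bar>?a (m + n)\<bar>)"
      by (rule summable_comparison_test'[where N=0, OF sb']) (use tb in auto)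
    show ?thesis by (rule suminf_le[OF tb sa' sb'])
  qed
  also have "\<dots> = d / 2 * (\<Sum>m. lam (m + n) * (e (m + n) s)\<^sup>2) + Tl t n / (2 * d)"
  proof -
    have s1: "summable (\<lambda>m. lam (m + n) * (e (m + n) s)\<^sup>2)" using summable_ignore_initial_segment[OF summ[OF s]] .
    have s2: "summable (\<lambda>m. lam (m + n) * (e (m + n) t)\<^sup>2)" using summable_ignore_initial_segment[OF summ[OF t]] .
    have "(\<Sum>m. ?b (m + n)) = (\<Sum>m. d / 2 * (lam (m + n) * (e (m + n) s)\<^sup>2)) + (\<Sum>m. (lam (m + n) * (e (m + n) t)\<^sup>2) / (2 * d))"
      using s1 s2 by (intro suminf_add[symmetric] summable_mult summable_divide)
    also have "\<dots> = d / 2 * (\<Sum>m. lam (m + n) * (e (m + n) s)\<^sup>2) + Tl t n / (2 * d)"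
      unfolding Tl_def using s1 s2 by (simp add: suminf_mult suminf_divide)
    finally show ?thesis .
  qed
  also have "\<dots> \<le> d / 2 * B + Tl t n / (2 * d)"
    using tail_le[OF s, of n] d by simp
  finally show ?thesis .
qed

lemma Tl_lim: "t \<in> I \<Longrightarrow> Tl t \<longlonglongrightarrow> 0"
proof -
  assume t: "t \<in> I"
  have "Tl t = (\<lambda>n. (\<Sum>j. lam j * (e j t)\<^sup>2) - (\<Sum>j<n. lam j * (e j t)\<^sup>2))"
    unfolding Tl_def using suminf_minus_initial_segment[OF summ[OF t]] by (simp add: fun_eq_iff)
  moreover have "(\<lambda>n. (\<Sum>j. lam j * (e j t)\<^sup>2) - (\<Sum>j<n. lam j * (e j t)\<^sup>2)) \<longlonglongrightarrow> (\<Sum>j. lam j * (e j t)\<^sup>2) - (\<Sum>j. lam j * (e j t)\<^sup>2)"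
    by (intro tendsto_intros summable_LIMSEQ summ t)
  ultimately show ?thesis by simp
qed

lemma K_unif: assumes t: "t \<in> I" shows "uniform_limit I (Kn t) (Kinf t) sequentially"
  unfolding uniform_limit_sequentially_iff
proof (intro allI impI)
  fix r :: real assume r: "r > 0"
  define d where "d = r / (B + 1)"
  have d: "d > 0" unfolding d_def using r B(1) by simp
  have "d * r > 0" using d r by simp
  then obtain N where N: "\<forall>n\<ge>N. \<bar>Tl t n\<bar> < d * r"
    using Tl_lim[OF t] unfolding LIMSEQ_def dist_real_def by fastforce
  show "\<exists>N. \<forall>n\<ge>N. \<forall>x\<in>I. dist (Kn t n x) (Kinf t x) < r"
  proof (intro exI allI impI ballI)
    fix n x assume n: "n \<ge> N" and x: "x \<in> I"
    have c1: "dist (Kn t n x) (Kinf t x) = \<bar>Kinf t x - Kn t n x\<bar>" by (simp add: dist_real_def abs_minus_commute)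
    have c2: "\<bar>Kinf t x - Kn t n x\<bar> \<le> d / 2 * B + Tl t n / (2 * d)" by (rule Kdiff_bound[OF t x d])
    have c3: "d / 2 * B < r / 2" unfolding d_def using r B(1) by (simp add: field_simps)
    have c4: "Tl t n / (2 * d) < (d * r) / (2 * d)"
      using N n d by (intro divide_strict_right_mono) auto
    have c5: "(d * r) / (2 * d) = r / 2" using d by simp
    show "dist (Kn t n x) (Kinf t x) < r" using c1 c2 c3 c4 c5 by linarith
  qed
qed

lemma Kn_cont: "continuous_on I (Kn t N)"
  unfolding Kn_def by (intro continuous_intros e_cont)

lemma Kinf_cont: "t \<in> I \<Longrightarrow> continuous_on I (Kinf t)"
  by (rule uniform_limit_theorem[OF _ K_unif]) (auto simp: Kn_cont)

end


context L4 begin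

lemma lint_sum:
  assumes hi: "\<And>j. set_integrable lborel I (\<lambda>s. e j s * h s)"
  shows "(LINT s:I|lborel. Kn t N s * h s) = (\<Sum>j<N. lam j * e j t * (LINT s:I|lborel. e j s * h s))"
proof -
  have eq: "(\<lambda>s. indicator I s *\<^sub>R (Kn t N s * h s)) = (\<lambda>s. \<Sum>j<N. (lam j * e j t) * (indicator I s *\<^sub>R (e j s * h s)))"
    by (auto simp: fun_eq_iff Kn_def sum_distrib_left sum_distrib_right algebra_simps)
  show ?thesis unfolding set_lebesgue_integral_def eq
  proof (subst Bochner_Integration.integral_sum)
    show "integrable lborel (\<lambda>s. (lam j * e j t) * (indicator I s *\<^sub>R (e j s * h s)))" for j
      using hi[of j] unfolding set_integrable_def by (intro integrable_mult_right)
  qed simp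
qed

lemma mercer_pt: assumes t: "t \<in> I" shows "k t t = Kinf t t"
proof -
  have ul: "uniform_limit I (Kn t) (Kinf t) sequentially" by (rule K_unif[OF t])
  have Kc: "continuous_on I (Kinf t)" by (rule Kinf_cont[OF t])
  have ej_mult: "set_integrable lborel I (\<lambda>s. e i s * e j s)" for i j using e_orth by auto
  have Kint: "(LINT s:I|lborel. Kinf t s * e j s) = lam j * e j t" for j
  proof -
    have lim1: "(\<lambda>N. LINT s:I|lborel. Kn t N s * e j s) \<longlonglongrightarrow> (LINT s:I|lborel. Kinf t s * e j s)"
      by (rule unif_int[OF ul Kn_cont Kc ej_int])
    have "(LINT s:I|lborel. Kn t N s * e j s) = (if j < N then lam j * e j t else 0)" for N
    proof -
      have "(LINT s:I|lborel. Kn t N s * e j s) = (\<Sum>i<N. lam i * e i t * (if i = j then 1 else 0))"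
        using lint_sum[OF ej_mult, of t N] e_orth by simp
      also have "\<dots> = (if j < N then lam j * e j t else 0)"
        by (simp add: if_distrib sum.delta cong: if_cong)
      finally show ?thesis .
    qed
    hence "\<forall>\<^sub>F N in sequentially. (LINT s:I|lborel. Kn t N s * e j s) = lam j * e j t"
      unfolding eventually_sequentially by (intro exI[of _ "Suc j"]) auto
    hence lim2: "(\<lambda>N. LINT s:I|lborel. Kn t N s * e j s) \<longlonglongrightarrow> lam j * e j t"
      by (rule tendsto_eventually)
    show ?thesis using LIMSEQ_unique[OF lim1 lim2] .
  qed
  define Rf where "Rf = (\<lambda>s. k s t - Kinf t s)"
  have Rc: "continuous_on I Rf" unfolding Rf_def using k_cont1[OF t] Kc by (intro continuous_intros)
  have kc: "continuous_on I (\<lambda>s. k s t)" by (rule k_cont1[OF t])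
  have Rint: "(LINT s:I|lborel. Rf s * e j s) = 0" for j
  proof -
    have i1: "set_integrable lborel I (\<lambda>s. k s t * e j s)" by (rule cont_mult_int[OF kc ej_int])
    have i2: "set_integrable lborel I (\<lambda>s. Kinf t s * e j s)" by (rule cont_mult_int[OF Kc ej_int])
    have "(LINT s:I|lborel. Rf s * e j s) = (LINT s:I|lborel. k s t * e j s - Kinf t s * e j s)"
      unfolding Rf_def by (simp add: algebra_simps)
    also have "\<dots> = (LINT s:I|lborel. k s t * e j s) - (LINT s:I|lborel. Kinf t s * e j s)"
      by (rule set_integral_diff(2)[OF i1 i2])
    also have "\<dots> = 0" using Kint[of j] e_eigen t by simp
    finally show ?thesis .
  qed
  have one_int: "set_integrable lborel I (\<lambda>s. 1::real)"
    by (simp add: set_integrable_def integrable_indicator_iff)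
  have Ri: "set_integrable lborel I Rf" using cont_mult_int[OF Rc one_int] by simp
  have RRi: "set_integrable lborel I (\<lambda>s. Rf s * Rf s)" by (rule cont_mult_int[OF Rc Ri])
  define f where "f = (\<lambda>s. indicator I s * Rf s)"
  have fm: "f \<in> borel_measurable lborel" unfolding f_def by (rule cont_meas[OF Rc])
  have f2: "set_integrable lborel I (\<lambda>s. (f s)\<^sup>2)"
  proof -
    have "(\<lambda>s. indicator I s *\<^sub>R (f s)\<^sup>2) = (\<lambda>s. indicator I s *\<^sub>R (Rf s * Rf s))"
      by (auto simp: fun_eq_iff f_def indicator_def power2_eq_square)
    thus ?thesis using RRi unfolding set_integrable_def by simp
  qed
  have fcong: "(LINT s:I|lborel. g s * f s) = (LINT s:I|lborel. g s * Rf s)" for g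
    by (rule set_lebesgue_integral_cong) (auto simp: f_def)
  have fe: "\<forall>j. (LINT s:I|lborel. f s * e j s) = 0"
  proof
    fix j
    have "(LINT s:I|lborel. f s * e j s) = (LINT s:I|lborel. Rf s * e j s)"
      by (rule set_lebesgue_integral_cong) (auto simp: f_def)
    thus "(LINT s:I|lborel. f s * e j s) = 0" using Rint by simp
  qed
  have kR: "(LINT s:I|lborel. k s t * Rf s) = 0"
    using e_complete fm f2 fe t fcong[of "\<lambda>s. k s t"] by auto
  have eR: "set_integrable lborel I (\<lambda>s. e j s * Rf s)" for j
    using cont_mult_int[OF Rc ej_int[of j]] by (simp add: mult.commute)
  have KR: "(LINT s:I|lborel. Kinf t s * Rf s) = 0"
  proof -
    have lim1: "(\<lambda>N. LINT s:I|lborel. Kn t N s * Rf s) \<longlonglongrightarrow> (LINT s:I|lborel. Kinf t s * Rf s)"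
      by (rule unif_int[OF ul Kn_cont Kc Ri])
    have "(LINT s:I|lborel. Kn t N s * Rf s) = 0" for N
      using lint_sum[OF eR, of t N] Rint by (simp add: mult.commute)
    hence lim2: "(\<lambda>N. LINT s:I|lborel. Kn t N s * Rf s) \<longlonglongrightarrow> 0" by simp
    show ?thesis using LIMSEQ_unique[OF lim1 lim2] .
  qed
  have RR0: "(LINT s:I|lborel. Rf s * Rf s) = 0"
  proof -
    have i1: "set_integrable lborel I (\<lambda>s. k s t * Rf s)" by (rule cont_mult_int[OF kc Ri])
    have i2: "set_integrable lborel I (\<lambda>s. Kinf t s * Rf s)" by (rule cont_mult_int[OF Kc Ri])
    have "(LINT s:I|lborel. Rf s * Rf s) = (LINT s:I|lborel. k s t * Rf s - Kinf t s * Rf s)"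
      by (rule set_lebesgue_integral_cong) (auto simp: Rf_def algebra_simps)
    also have "\<dots> = 0" using set_integral_diff(2)[OF i1 i2] kR KR by simp
    finally show ?thesis .
  qed
  have "Rf t * Rf t = 0"
    using t by (intro cont_zero[where g="\<lambda>s. Rf s * Rf s"]) (auto intro: continuous_intros Rc RRi RR0)
  thus ?thesis unfolding Rf_def by simp
qed

lemma mercer_sum: "t \<in> I \<Longrightarrow> (\<lambda>L. \<Sum>j<L. lam j * (e j t)\<^sup>2) \<longlonglongrightarrow> k t t"
proof -
  assume t: "t \<in> I"
  have "Kinf t t = (\<Sum>j. lam j * (e j t)\<^sup>2)" unfolding Kinf_def by (simp add: power2_eq_square mult.assoc)
  thus ?thesis using summable_LIMSEQ[OF summ[OF t]] mercer_pt[OF t] by simp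
qed

lemma unif_R: "r > 0 \<Longrightarrow> \<exists>L. \<forall>t\<in>I. R L t < r"
proof -
  assume r: "r > 0"
  define fD where "fD = (\<lambda>L t. k t t - (\<Sum>j<L. lam j * (e j t)\<^sup>2))"
  have "\<exists>L. \<forall>t\<in>I. fD L t < r"
  proof (rule dini)
    show "continuous_on I (fD L)" for L
      unfolding fD_def by (intro continuous_intros k_cont_diag e_cont)
    show "fD L' t \<le> fD L t" if "L \<le> L'" "t \<in> I" for L L' t
    proof -
      have "(\<Sum>j<L. lam j * (e j t)\<^sup>2) \<le> (\<Sum>j<L'. lam j * (e j t)\<^sup>2)"
        using that lam_nonneg by (intro sum_mono2) auto
      thus ?thesis unfolding fD_def by simp
    qed
    show "\<exists>L. fD L t < r" if t: "t \<in> I" for t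
    proof -
      have "(\<lambda>L. fD L t) \<longlonglongrightarrow> k t t - k t t"
        unfolding fD_def by (intro tendsto_intros mercer_sum t)
      hence "\<forall>\<^sub>F L in sequentially. fD L t < r" using r by (simp add: order_tendstoD(2))
      thus ?thesis by (meson eventually_sequentially order_refl)
    qed
  qed
  thus ?thesis using R_eq unfolding fD_def by auto
qed

end


context L4 begin

lemma mgf_sum:
  assumes F: "finite F"
  shows "integrable M (\<lambda>\<omega>. exp (\<theta> * (\<Sum>j\<in>F. Z j \<omega> * a j)))"
    "(\<integral>\<omega>. exp (\<theta> * (\<Sum>j\<in>F. Z j \<omega> * a j)) \<partial>M) \<le> exp (\<theta>\<^sup>2 * (\<Sum>j\<in>F. lam j * (a j)\<^sup>2) / 2)"
proof -
  define Y where "Y = (\<lambda>j \<omega>. exp (\<theta> * (Z j \<omega> * a j)))"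
  have eq: "exp (\<theta> * (\<Sum>j\<in>F. Z j \<omega> * a j)) = (\<Prod>j\<in>F. Y j \<omega>)" for \<omega>
    unfolding Y_def using F by (simp add: sum_distrib_left exp_sum)
  have ind: "indep_vars (\<lambda>_. borel) (\<lambda>j \<omega>. (\<lambda>z. exp (\<theta> * (z * a j))) (Z j \<omega>)) F"
    by (rule indep_vars_compose2[OF indep_vars_subset[OF Z_indep]]) auto
  have ind': "indep_vars (\<lambda>_. borel) Y F" using ind unfolding Y_def by simp
  have sg: "integrable M (\<lambda>\<omega>. exp ((\<theta> * a j) * (Z j \<omega> - 0)))"
    "(\<integral>\<omega>. exp ((\<theta> * a j) * (Z j \<omega> - 0)) \<partial>M) \<le> exp ((\<theta> * a j)\<^sup>2 * (sqrt (lam j))\<^sup>2 / 2)" for j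
    using Z_sg[of j] unfolding sub_gaussian_def by blast+
  have Yi: "integrable M (Y j)" for j using sg(1)[of j] unfolding Y_def by (simp add: algebra_simps)
  have Ye: "(\<integral>\<omega>. Y j \<omega> \<partial>M) \<le> exp (\<theta>\<^sup>2 * (lam j * (a j)\<^sup>2) / 2)" for j
    using sg(2)[of j] lam_nonneg unfolding Y_def by (simp add: algebra_simps power_mult_distrib)
  show "integrable M (\<lambda>\<omega>. exp (\<theta> * (\<Sum>j\<in>F. Z j \<omega> * a j)))"
    unfolding eq using indep_vars_integrable[OF F ind'] Yi by simp
  have "(\<integral>\<omega>. exp (\<theta> * (\<Sum>j\<in>F. Z j \<omega> * a j)) \<partial>M) = (\<Prod>j\<in>F. \<integral>\<omega>. Y j \<omega> \<partial>M)"
    unfolding eq using indep_vars_lebesgue_integral[OF F ind'] Yi by simp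
  also have "\<dots> \<le> (\<Prod>j\<in>F. exp (\<theta>\<^sup>2 * (lam j * (a j)\<^sup>2) / 2))"
    by (intro prod_mono conjI Ye integral_nonneg_AE) (auto simp: Y_def)
  also have "\<dots> = exp (\<theta>\<^sup>2 * (\<Sum>j\<in>F. lam j * (a j)\<^sup>2) / 2)"
    using F by (simp add: exp_sum[symmetric] sum_distrib_left sum_divide_distrib)
  finally show "(\<integral>\<omega>. exp (\<theta> * (\<Sum>j\<in>F. Z j \<omega> * a j)) \<partial>M) \<le> exp (\<theta>\<^sup>2 * (\<Sum>j\<in>F. lam j * (a j)\<^sup>2) / 2)" .
qed

lemma as_conv:
  fixes f :: "nat \<Rightarrow> 'a \<Rightarrow> real"
  assumes fm[measurable]: "\<And>n. f n \<in> borel_measurable M" and fi: "\<And>n. integrable M (\<lambda>\<omega>. (f n \<omega>)\<^sup>2)"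
    and s: "summable (\<lambda>n. \<integral>\<omega>. (f n \<omega>)\<^sup>2 \<partial>M)"
  shows "AE \<omega> in M. (\<lambda>n. f n \<omega>) \<longlonglongrightarrow> 0"
proof -
  have "(\<integral>\<^sup>+\<omega>. (\<Sum>n. ennreal ((f n \<omega>)\<^sup>2)) \<partial>M) = (\<Sum>n. \<integral>\<^sup>+\<omega>. ennreal ((f n \<omega>)\<^sup>2) \<partial>M)"
    by (rule nn_integral_suminf) measurable
  also have "\<dots> = (\<Sum>n. ennreal (\<integral>\<omega>. (f n \<omega>)\<^sup>2 \<partial>M))"
    by (intro arg_cong[where f=suminf] ext nn_integral_eq_integral fi) simp
  also have "\<dots> \<noteq> \<infinity>"
  proof -
    have nn: "\<And>n. 0 \<le> (\<integral>\<omega>. (f n \<omega>)\<^sup>2 \<partial>M)" by (intro integral_nonneg_AE) simp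
    show ?thesis unfolding infinity_ennreal_def by (rule ennreal_suminf_neq_top[OF s nn])
  qed
  finally have fin: "(\<integral>\<^sup>+\<omega>. (\<Sum>n. ennreal ((f n \<omega>)\<^sup>2)) \<partial>M) \<noteq> \<infinity>" .
  have "AE \<omega> in M. (\<Sum>n. ennreal ((f n \<omega>)\<^sup>2)) \<noteq> \<infinity>"
    by (rule nn_integral_PInf_AE[OF _ fin]) measurable
  thus ?thesis
  proof (rule AE_mp, intro AE_I2 impI)
    fix \<omega> assume "(\<Sum>n. ennreal ((f n \<omega>)\<^sup>2)) \<noteq> \<infinity>"
    hence "summable (\<lambda>n. (f n \<omega>)\<^sup>2)" by (intro summable_suminf_not_top) auto
    hence "(\<lambda>n. (f n \<omega>)\<^sup>2) \<longlonglongrightarrow> 0" by (rule summable_LIMSEQ_zero)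
    hence "(\<lambda>n. sqrt ((f n \<omega>)\<^sup>2)) \<longlonglongrightarrow> sqrt 0" by (intro tendsto_intros)
    hence "(\<lambda>n. \<bar>f n \<omega>\<bar>) \<longlonglongrightarrow> 0" by simp
    thus "(\<lambda>n. f n \<omega>) \<longlonglongrightarrow> 0" by (simp add: tendsto_rabs_zero_iff)
  qed
qed

lemma mgf_lim:
  fixes Lq :: "nat \<Rightarrow> nat"
  assumes Wm[measurable]: "W \<in> borel_measurable M" and W2: "integrable M (\<lambda>\<omega>. (W \<omega>)\<^sup>2)"
    and WZ: "\<And>j. (\<integral>\<omega>. W \<omega> * Z j \<omega> \<partial>M) = lam j * a j"
    and s: "summable (\<lambda>n. \<integral>\<omega>. ((\<Sum>j<Lq n. Z j \<omega> * a j) - W \<omega>)\<^sup>2 \<partial>M)"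
  shows "integrable M (\<lambda>\<omega>. exp (\<theta> * W \<omega>))"
    "(\<integral>\<omega>. exp (\<theta> * W \<omega>) \<partial>M) \<le> exp (\<theta>\<^sup>2 * (\<integral>\<omega>. (W \<omega>)\<^sup>2 \<partial>M) / 2)"
proof -
  define Wn where "Wn = (\<lambda>n \<omega>. \<Sum>j<Lq n. Z j \<omega> * a j)"
  define V where "V = (\<integral>\<omega>. (W \<omega>)\<^sup>2 \<partial>M)"
  have Wnm[measurable]: "Wn n \<in> borel_measurable M" for n unfolding Wn_def by measurable
  have ae: "AE \<omega> in M. (\<lambda>n. Wn n \<omega> - W \<omega>) \<longlonglongrightarrow> 0"
  proof (rule as_conv)
    show "(\<lambda>\<omega>. Wn n \<omega> - W \<omega>) \<in> borel_measurable M" for n by measurable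
    show "integrable M (\<lambda>\<omega>. (Wn n \<omega> - W \<omega>)\<^sup>2)" for n
      unfolding Wn_def by (rule proj(1)[OF Wm W2]) (simp_all add: WZ)
    show "summable (\<lambda>n. \<integral>\<omega>. (Wn n \<omega> - W \<omega>)\<^sup>2 \<partial>M)" using s unfolding Wn_def .
  qed
  have ae2: "AE \<omega> in M. (\<lambda>n. ennreal (exp (\<theta> * Wn n \<omega>))) \<longlonglongrightarrow> ennreal (exp (\<theta> * W \<omega>))"
  proof (rule AE_mp[OF ae], intro AE_I2 impI)
    fix \<omega> assume "(\<lambda>n. Wn n \<omega> - W \<omega>) \<longlonglongrightarrow> 0"
    hence "(\<lambda>n. (Wn n \<omega> - W \<omega>) + W \<omega>) \<longlonglongrightarrow> 0 + W \<omega>" by (intro tendsto_intros)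
    hence "(\<lambda>n. Wn n \<omega>) \<longlonglongrightarrow> W \<omega>" by simp
    thus "(\<lambda>n. ennreal (exp (\<theta> * Wn n \<omega>))) \<longlonglongrightarrow> ennreal (exp (\<theta> * W \<omega>))"
      by (intro tendsto_intros)
  qed
  have bnd: "(\<integral>\<omega>. exp (\<theta> * Wn n \<omega>) \<partial>M) \<le> exp (\<theta>\<^sup>2 * V / 2)" for n
  proof -
    have "(\<integral>\<omega>. exp (\<theta> * Wn n \<omega>) \<partial>M) \<le> exp (\<theta>\<^sup>2 * (\<Sum>j<Lq n. lam j * (a j)\<^sup>2) / 2)"
      unfolding Wn_def by (rule mgf_sum(2)) simp
    also have "\<dots> \<le> exp (\<theta>\<^sup>2 * V / 2)"
    proof -
      have "(\<integral>\<omega>. ((\<Sum>j<Lq n. Z j \<omega> * a j) - W \<omega>)\<^sup>2 \<partial>M) = V - (\<Sum>j<Lq n. lam j * (a j)\<^sup>2)"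
        unfolding V_def by (rule proj(2)[OF Wm W2]) (auto simp: WZ)
      moreover have "0 \<le> (\<integral>\<omega>. ((\<Sum>j<Lq n. Z j \<omega> * a j) - W \<omega>)\<^sup>2 \<partial>M)" by simp
      ultimately have "(\<Sum>j<Lq n. lam j * (a j)\<^sup>2) \<le> V" by simp
      thus ?thesis by (simp add: mult_left_mono)
    qed
    finally show ?thesis .
  qed
  have Wni: "integrable M (\<lambda>\<omega>. exp (\<theta> * Wn n \<omega>))" for n unfolding Wn_def by (rule mgf_sum(1)) simp
  have "(\<integral>\<^sup>+\<omega>. ennreal (exp (\<theta> * W \<omega>)) \<partial>M) = (\<integral>\<^sup>+\<omega>. liminf (\<lambda>n. ennreal (exp (\<theta> * Wn n \<omega>))) \<partial>M)"
  proof (rule nn_integral_cong_AE, rule AE_mp[OF ae2], intro AE_I2 impI)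
    fix \<omega> assume h: "(\<lambda>n. ennreal (exp (\<theta> * Wn n \<omega>))) \<longlonglongrightarrow> ennreal (exp (\<theta> * W \<omega>))"
    show "ennreal (exp (\<theta> * W \<omega>)) = liminf (\<lambda>n. ennreal (exp (\<theta> * Wn n \<omega>)))"
      by (rule lim_imp_Liminf[OF _ h, symmetric]) simp
  qed
  also have "\<dots> \<le> liminf (\<lambda>n. \<integral>\<^sup>+\<omega>. ennreal (exp (\<theta> * Wn n \<omega>)) \<partial>M)"
    by (rule nn_integral_liminf) simp
  also have "\<dots> \<le> ennreal (exp (\<theta>\<^sup>2 * V / 2))"
  proof (rule Liminf_le[OF trivial_limit_sequentially], intro always_eventually allI)
    fix n
    have "(\<integral>\<^sup>+\<omega>. ennreal (exp (\<theta> * Wn n \<omega>)) \<partial>M) = ennreal (\<integral>\<omega>. exp (\<theta> * Wn n \<omega>) \<partial>M)"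
      by (rule nn_integral_eq_integral[OF Wni]) simp
    thus "(\<integral>\<^sup>+\<omega>. ennreal (exp (\<theta> * Wn n \<omega>)) \<partial>M) \<le> ennreal (exp (\<theta>\<^sup>2 * V / 2))"
      using bnd[of n] by (simp add: ennreal_leI)
  qed
  finally have nn: "(\<integral>\<^sup>+\<omega>. ennreal (exp (\<theta> * W \<omega>)) \<partial>M) \<le> ennreal (exp (\<theta>\<^sup>2 * V / 2))" .
  show int: "integrable M (\<lambda>\<omega>. exp (\<theta> * W \<omega>))"
  proof (rule integrableI_nonneg)
    show "(\<integral>\<^sup>+\<omega>. ennreal (exp (\<theta> * W \<omega>)) \<partial>M) < \<infinity>"
      using nn by (rule le_less_trans) simp
  qed simp_all
  have "ennreal (\<integral>\<omega>. exp (\<theta> * W \<omega>) \<partial>M) \<le> ennreal (exp (\<theta>\<^sup>2 * V / 2))"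
    using nn nn_integral_eq_integral[OF int] by simp
  thus "(\<integral>\<omega>. exp (\<theta> * W \<omega>) \<partial>M) \<le> exp (\<theta>\<^sup>2 * (\<integral>\<omega>. (W \<omega>)\<^sup>2 \<partial>M) / 2)"
    unfolding V_def by (simp add: ennreal_le_iff)
qed

end


lemma (in prob_space) fourth_moment:
  fixes W :: "'a \<Rightarrow> real"
  assumes Wm[measurable]: "W \<in> borel_measurable M" and W2: "integrable M (\<lambda>\<omega>. (W \<omega>)\<^sup>2)"
    and mi: "\<And>\<theta>. integrable M (\<lambda>\<omega>. exp (\<theta> * W \<omega>))"
    and mb: "\<And>\<theta>. (\<integral>\<omega>. exp (\<theta> * W \<omega>) \<partial>M) \<le> exp (\<theta>\<^sup>2 * (\<integral>\<omega>. (W \<omega>)\<^sup>2 \<partial>M) / 2)"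
  shows "integrable M (\<lambda>\<omega>. (W \<omega>) ^ 4)" "(\<integral>\<omega>. (W \<omega>) ^ 4 \<partial>M) \<le> 1024 * (\<integral>\<omega>. (W \<omega>)\<^sup>2 \<partial>M)\<^sup>2"
proof -
  define V where "V = (\<integral>\<omega>. (W \<omega>)\<^sup>2 \<partial>M)"
  have V0: "V \<ge> 0" unfolding V_def by simp
  have key: "(\<theta> * W \<omega>) ^ 4 \<le> 256 * (exp (\<theta> * W \<omega>) + exp ((- \<theta>) * W \<omega>))" for \<theta> \<omega>
    using four_le_exp[of "\<theta> * W \<omega>"] by simp
  have ie: "integrable M (\<lambda>\<omega>. 256 * (exp (\<theta> * W \<omega>) + exp ((- \<theta>) * W \<omega>)))" for \<theta>
    using mi[of \<theta>] mi[of "-\<theta>"] by auto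
  show W4: "integrable M (\<lambda>\<omega>. (W \<omega>) ^ 4)"
  proof (rule Bochner_Integration.integrable_bound[OF ie[of 1]])
    show "AE x in M. norm ((W x) ^ 4) \<le> norm (256 * (exp (1 * W x) + exp ((- 1) * W x)))"
      using key[of 1] by (auto simp: add_pos_pos)
  qed simp
  show "(\<integral>\<omega>. (W \<omega>) ^ 4 \<partial>M) \<le> 1024 * (\<integral>\<omega>. (W \<omega>)\<^sup>2 \<partial>M)\<^sup>2"
  proof (cases "V = 0")
    case True
    have "AE \<omega> in M. (W \<omega>)\<^sup>2 = 0"
      using integral_nonneg_eq_0_iff_AE[OF W2] True unfolding V_def by simp
    hence "AE \<omega> in M. (W \<omega>) ^ 4 = 0" by (auto elim!: AE_mp)
    hence "(\<integral>\<omega>. (W \<omega>) ^ 4 \<partial>M) = (\<integral>\<omega>. 0 \<partial>M)" by (intro integral_cong_AE) auto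
    thus ?thesis by simp
  next
    case False
    hence Vp: "V > 0" using V0 by simp
    define \<theta> where "\<theta> = 1 / sqrt V"
    have th2: "\<theta>\<^sup>2 * V = 1" unfolding \<theta>_def using Vp by (simp add: power_divide)
    have th4: "\<theta> ^ 4 = 1 / V\<^sup>2"
    proof -
      have "\<theta> ^ 4 = (\<theta>\<^sup>2)\<^sup>2" by (simp flip: power_mult)
      also have "\<theta>\<^sup>2 = 1 / V" using th2 Vp by (simp add: field_simps)
      finally show ?thesis by (simp add: power_divide)
    qed
    have "(\<integral>\<omega>. (\<theta> * W \<omega>) ^ 4 \<partial>M) \<le> (\<integral>\<omega>. 256 * (exp (\<theta> * W \<omega>) + exp ((- \<theta>) * W \<omega>)) \<partial>M)"
      using W4 ie key by (intro integral_mono) (auto simp: power_mult_distrib)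
    also have "\<dots> = 256 * ((\<integral>\<omega>. exp (\<theta> * W \<omega>) \<partial>M) + (\<integral>\<omega>. exp ((- \<theta>) * W \<omega>) \<partial>M))"
      using mi[of \<theta>] mi[of "-\<theta>"] by simp
    also have "\<dots> \<le> 256 * (exp (\<theta>\<^sup>2 * V / 2) + exp ((-\<theta>)\<^sup>2 * V / 2))"
      using mb[of \<theta>] mb[of "-\<theta>"] unfolding V_def by simp
    also have "\<dots> = 512 * exp (1 / 2)" using th2 by simp
    also have "\<dots> \<le> 1024" using exp_half_le2 by simp
    finally have "\<theta> ^ 4 * (\<integral>\<omega>. (W \<omega>) ^ 4 \<partial>M) \<le> 1024" by (simp add: power_mult_distrib)
    hence "(\<integral>\<omega>. (W \<omega>) ^ 4 \<partial>M) / V\<^sup>2 \<le> 1024" using th4 by simp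
    thus ?thesis using Vp unfolding V_def[symmetric] by (simp add: field_simps)
  qed
qed

context L4 begin

definition Lq :: "nat \<Rightarrow> nat" where
  "Lq n = (SOME L. \<forall>t\<in>I. R L t < (1/2) ^ n)"

lemma Lq: "t \<in> I \<Longrightarrow> R (Lq n) t < (1/2) ^ n"
  using someI_ex[OF unif_R[of "(1/2)^n"]] unfolding Lq_def by auto

lemma geo_summ: "summable (\<lambda>n. c * (1/2::real) ^ n)"
  by (intro summable_mult summable_geometric) simp

lemma mgf_X: assumes t: "t \<in> I"
  shows "integrable M (\<lambda>\<omega>. exp (\<theta> * X t \<omega>))" "(\<integral>\<omega>. exp (\<theta> * X t \<omega>) \<partial>M) \<le> exp (\<theta>\<^sup>2 * B / 2)"
proof -
  have s: "summable (\<lambda>n. \<integral>\<omega>. ((\<Sum>j<Lq n. Z j \<omega> * e j t) - X t \<omega>)\<^sup>2 \<partial>M)"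
  proof (rule summable_comparison_test'[where N=0, OF geo_summ[of 1]])
    fix n show "norm (\<integral>\<omega>. ((\<Sum>j<Lq n. Z j \<omega> * e j t) - X t \<omega>)\<^sup>2 \<partial>M) \<le> 1 * (1/2) ^ n"
      using Lq[OF t, of n] unfolding R_def by simp
  qed
  show "integrable M (\<lambda>\<omega>. exp (\<theta> * X t \<omega>))"
    using t by (intro mgf_lim(1)[OF _ _ _ s] Xm X2 EXZ(2))
  have "(\<integral>\<omega>. exp (\<theta> * X t \<omega>) \<partial>M) \<le> exp (\<theta>\<^sup>2 * (\<integral>\<omega>. (X t \<omega>)\<^sup>2 \<partial>M) / 2)"
    using t by (intro mgf_lim(2)[OF _ _ _ s] Xm X2 EXZ(2))
  also have "\<dots> \<le> exp (\<theta>\<^sup>2 * B / 2)"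
    using B(2)[OF t] by (simp add: k_diag[symmetric] mult_left_mono)
  finally show "(\<integral>\<omega>. exp (\<theta> * X t \<omega>) \<partial>M) \<le> exp (\<theta>\<^sup>2 * B / 2)" .
qed

lemma sq_diff_le: "((a::real) - b)\<^sup>2 \<le> 2 * a\<^sup>2 + 2 * b\<^sup>2"
proof -
  have "0 \<le> (a + b)\<^sup>2" by simp
  thus ?thesis by (simp add: power2_eq_square algebra_simps)
qed

lemma sq_diff_int:
  fixes f g :: "'a \<Rightarrow> real"
  assumes [measurable]: "f \<in> borel_measurable M" "g \<in> borel_measurable M"
    and fi: "integrable M (\<lambda>\<omega>. (f \<omega>)\<^sup>2)" and gi: "integrable M (\<lambda>\<omega>. (g \<omega>)\<^sup>2)"
  shows "integrable M (\<lambda>\<omega>. (f \<omega> - g \<omega>)\<^sup>2)"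
proof (rule Bochner_Integration.integrable_bound[of _ "\<lambda>\<omega>. 2 * (f \<omega>)\<^sup>2 + 2 * (g \<omega>)\<^sup>2"])
  show "integrable M (\<lambda>\<omega>. 2 * (f \<omega>)\<^sup>2 + 2 * (g \<omega>)\<^sup>2)" using fi gi by auto
  show "AE x in M. norm ((f x - g x)\<^sup>2) \<le> norm (2 * (f x)\<^sup>2 + 2 * (g x)\<^sup>2)"
    using sq_diff_le by auto
qed measurable

lemma D2: "s \<in> I \<Longrightarrow> t \<in> I \<Longrightarrow> integrable M (\<lambda>\<omega>. (X t \<omega> - X s \<omega>)\<^sup>2)"
  by (intro sq_diff_int Xm X2)

lemma mgf_D: assumes s: "s \<in> I" and t: "t \<in> I"
  shows "integrable M (\<lambda>\<omega>. exp (\<theta> * (X t \<omega> - X s \<omega>)))"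
    "(\<integral>\<omega>. exp (\<theta> * (X t \<omega> - X s \<omega>)) \<partial>M) \<le> exp (\<theta>\<^sup>2 * (\<integral>\<omega>. (X t \<omega> - X s \<omega>)\<^sup>2 \<partial>M) / 2)"
proof -
  define a where "a = (\<lambda>j. e j t - e j s)"
  have Dm: "(\<lambda>\<omega>. X t \<omega> - X s \<omega>) \<in> borel_measurable M" using s t by measurable
  have WZ: "(\<integral>\<omega>. (X t \<omega> - X s \<omega>) * Z j \<omega> \<partial>M) = lam j * a j" for j
  proof -
    have "(\<integral>\<omega>. (X t \<omega> - X s \<omega>) * Z j \<omega> \<partial>M) = (\<integral>\<omega>. X t \<omega> * Z j \<omega> - X s \<omega> * Z j \<omega> \<partial>M)"
      by (simp add: algebra_simps)
    also have "\<dots> = lam j * e j t - lam j * e j s" using EXZ[OF s] EXZ[OF t] by simp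
    finally show ?thesis unfolding a_def by (simp add: algebra_simps)
  qed
  have s': "summable (\<lambda>n. \<integral>\<omega>. ((\<Sum>j<Lq n. Z j \<omega> * a j) - (X t \<omega> - X s \<omega>))\<^sup>2 \<partial>M)"
  proof (rule summable_comparison_test'[where N=0, OF geo_summ[of 4]])
    fix n
    let ?A = "\<lambda>\<omega>. (\<Sum>j<Lq n. Z j \<omega> * e j t) - X t \<omega>"
    let ?B = "\<lambda>\<omega>. (\<Sum>j<Lq n. Z j \<omega> * e j s) - X s \<omega>"
    have eq: "((\<Sum>j<Lq n. Z j \<omega> * a j) - (X t \<omega> - X s \<omega>)) = ?A \<omega> - ?B \<omega>" for \<omega>
      unfolding a_def by (simp add: algebra_simps sum_subtractf)
    have "(\<integral>\<omega>. ((\<Sum>j<Lq n. Z j \<omega> * a j) - (X t \<omega> - X s \<omega>))\<^sup>2 \<partial>M) \<le> (\<integral>\<omega>. 2 * (?A \<omega>)\<^sup>2 + 2 * (?B \<omega>)\<^sup>2 \<partial>M)"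
      unfolding eq
    proof (rule integral_mono)
      show "integrable M (\<lambda>\<omega>. (?A \<omega> - ?B \<omega>)\<^sup>2)"
        using s t by (intro sq_diff_int R_int) measurable
      show "integrable M (\<lambda>\<omega>. 2 * (?A \<omega>)\<^sup>2 + 2 * (?B \<omega>)\<^sup>2)"
        using R_int[OF s] R_int[OF t] by auto
    qed (rule sq_diff_le)
    also have "\<dots> = 2 * R (Lq n) t + 2 * R (Lq n) s"
      using R_int[OF s] R_int[OF t] unfolding R_def by simp
    also have "\<dots> \<le> 4 * (1/2) ^ n" using Lq[OF s, of n] Lq[OF t, of n] by simp
    finally show "norm (\<integral>\<omega>. ((\<Sum>j<Lq n. Z j \<omega> * a j) - (X t \<omega> - X s \<omega>))\<^sup>2 \<partial>M) \<le> 4 * (1/2) ^ n"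
      by simp
  qed
  show "integrable M (\<lambda>\<omega>. exp (\<theta> * (X t \<omega> - X s \<omega>)))"
    by (rule mgf_lim(1)[OF Dm D2[OF s t] WZ s'])
  show "(\<integral>\<omega>. exp (\<theta> * (X t \<omega> - X s \<omega>)) \<partial>M) \<le> exp (\<theta>\<^sup>2 * (\<integral>\<omega>. (X t \<omega> - X s \<omega>)\<^sup>2 \<partial>M) / 2)"
    by (rule mgf_lim(2)[OF Dm D2[OF s t] WZ s'])
qed

lemma D4: assumes s: "s \<in> I" and t: "t \<in> I"
  shows "integrable M (\<lambda>\<omega>. (X t \<omega> - X s \<omega>) ^ 4)"
    "(\<integral>\<omega>. (X t \<omega> - X s \<omega>) ^ 4 \<partial>M) \<le> 1024 * (\<integral>\<omega>. (X t \<omega> - X s \<omega>)\<^sup>2 \<partial>M)\<^sup>2"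
  using s t by (intro fourth_moment[where W="\<lambda>\<omega>. X t \<omega> - X s \<omega>"] mgf_D D2; measurable)+

end


lemma sq_le2: "((a::real) - b)\<^sup>2 \<le> 2 * a\<^sup>2 + 2 * b\<^sup>2"
proof -
  have "0 \<le> (a + b)\<^sup>2" by simp
  thus ?thesis by (simp add: power2_eq_square algebra_simps)
qed

lemma exp_diff_half: assumes "b \<le> a" shows "exp a - exp b \<le> (a - b) * exp (a::real)"
proof -
  have "exp (b - a) \<ge> 1 + (b - a)" by (rule exp_ge_add_one_self)
  hence "exp a * exp (b - a) \<ge> exp a * (1 + (b - a))" by (simp add: mult_left_mono)
  moreover have "exp a * exp (b - a) = exp b" by (simp add: exp_add[symmetric])
  ultimately show ?thesis by (simp add: algebra_simps)
qed

lemma exp_diff: "\<bar>exp a - exp b\<bar> \<le> \<bar>a - b\<bar> * (exp a + exp (b::real))"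
proof (cases "b \<le> a")
  case True
  have "exp a - exp b \<le> (a - b) * exp a" by (rule exp_diff_half[OF True])
  also have "\<dots> \<le> (a - b) * (exp a + exp b)" using True by (simp add: mult_left_mono)
  finally show ?thesis using True by simp
next
  case False
  hence ba: "a \<le> b" by simp
  have "exp b - exp a \<le> (b - a) * exp b" by (rule exp_diff_half[OF ba])
  also have "\<dots> \<le> (b - a) * (exp a + exp b)" using ba by (simp add: mult_left_mono)
  finally show ?thesis using ba by (simp add: abs_minus_commute)
qed

lemma exp_diff_sq: "(exp (c * x) - exp (c * y))\<^sup>2 \<le> 2 * c\<^sup>2 * (x - y)\<^sup>2 * (exp (2 * c * x) + exp (2 * c * (y::real)))"
proof -
  have "(exp (c * x) - exp (c * y))\<^sup>2 = \<bar>exp (c * x) - exp (c * y)\<bar>\<^sup>2" by simp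
  also have "\<dots> \<le> (\<bar>c * x - c * y\<bar> * (exp (c * x) + exp (c * y)))\<^sup>2"
    by (intro power_mono exp_diff) simp
  also have "\<dots> = (c * x - c * y)\<^sup>2 * (exp (c * x) + exp (c * y))\<^sup>2" by (simp add: power_mult_distrib)
  also have "(exp (c * x) + exp (c * y))\<^sup>2 \<le> 2 * (exp (c * x))\<^sup>2 + 2 * (exp (c * y))\<^sup>2"
    using sq_le2[of "exp (c * x)" "- exp (c * y)"] by simp
  hence "(c * x - c * y)\<^sup>2 * (exp (c * x) + exp (c * y))\<^sup>2 \<le> (c * x - c * y)\<^sup>2 * (2 * (exp (c * x))\<^sup>2 + 2 * (exp (c * y))\<^sup>2)"
    by (simp add: mult_left_mono)
  also have "(exp (c * x))\<^sup>2 = exp (2 * c * x)" by (simp add: power2_eq_square exp_add[symmetric])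
  also have "(exp (c * y))\<^sup>2 = exp (2 * c * y)" by (simp add: power2_eq_square exp_add[symmetric])
  also have "(c * x - c * y)\<^sup>2 * (2 * exp (2 * c * x) + 2 * exp (2 * c * y)) = 2 * c\<^sup>2 * (x - y)\<^sup>2 * (exp (2 * c * x) + exp (2 * c * y))"
    by (simp add: power2_eq_square algebra_simps)
  finally show ?thesis .
qed

lemma g_pt:
  fixes a b E K D K' :: real
  assumes h1: "\<bar>a\<bar> \<le> max \<bar>E\<bar> (K * \<bar>D\<bar>)" and h2: "\<bar>b\<bar> \<le> T" and K: "K \<ge> 0"
  shows "(a + b)\<^sup>2 \<le> 2 * E\<^sup>2 + 2 * K\<^sup>2 * D\<^sup>2 + 2 * T\<^sup>2"
proof -
  have "(a + b)\<^sup>2 \<le> 2 * a\<^sup>2 + 2 * b\<^sup>2" using sq_le2[of a "-b"] by simp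
  moreover have "a\<^sup>2 \<le> E\<^sup>2 + K\<^sup>2 * D\<^sup>2"
  proof -
    have "a\<^sup>2 = \<bar>a\<bar>\<^sup>2" by simp
    also have "\<dots> \<le> (max \<bar>E\<bar> (K * \<bar>D\<bar>))\<^sup>2" by (intro power_mono h1) simp
    also have "\<dots> \<le> E\<^sup>2 + K\<^sup>2 * D\<^sup>2" using K
      by (cases "\<bar>E\<bar> \<le> K * \<bar>D\<bar>") (auto simp: max_def power_mult_distrib)
    finally show ?thesis .
  qed
  moreover have "b\<^sup>2 \<le> T\<^sup>2"
  proof -
    have "b\<^sup>2 = \<bar>b\<bar>\<^sup>2" by simp
    also have "\<dots> \<le> T\<^sup>2" by (intro power_mono h2) simp
    finally show ?thesis .
  qed
  ultimately show ?thesis by simp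
qed

lemma g_cont:
  fixes g :: "real \<Rightarrow> real"
  assumes gl: "\<forall>x y. g x - g y \<le> max \<bar>exp (c * x) - exp (c * y)\<bar> (K * \<bar>x - y\<bar>)"
  shows "continuous_on UNIV g"
proof -
  have "isCont g x" for x
  proof -
    let ?h = "\<lambda>y. max \<bar>exp (c * y) - exp (c * x)\<bar> (K * \<bar>y - x\<bar>)"
    have "(?h \<longlongrightarrow> max \<bar>exp (c * x) - exp (c * x)\<bar> (K * \<bar>x - x\<bar>)) (at x)"
      by (intro tendsto_intros)
    hence h0: "(?h \<longlongrightarrow> 0) (at x)" by simp
    have "((\<lambda>y. g y - g x) \<longlongrightarrow> 0) (at x)"
    proof (rule Lim_null_comparison[OF always_eventually h0], intro allI)
      fix y
      have "g y - g x \<le> ?h y" using gl by blast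
      moreover have "g x - g y \<le> ?h y"
        using gl[rule_format, of x y] by (simp add: abs_minus_commute)
      ultimately show "norm (g y - g x) \<le> ?h y" by (simp add: abs_le_iff)
    qed
    thus ?thesis unfolding isCont_def by (rule LIM_zero_cancel)
  qed
  thus ?thesis by (simp add: continuous_at_imp_continuous_on)
qed

context L4 begin

lemma EDY:
  assumes s: "s \<in> I" and t: "t \<in> I" and u: "u \<in> I"
  shows "integrable M (\<lambda>\<omega>. (X t \<omega> - X s \<omega>)\<^sup>2 * exp (2 * c * X u \<omega>))"
    "(\<integral>\<omega>. (X t \<omega> - X s \<omega>)\<^sup>2 * exp (2 * c * X u \<omega>) \<partial>M)
       \<le> (\<integral>\<omega>. (X t \<omega> - X s \<omega>)\<^sup>2 \<partial>M) * (1024 + exp (8 * c\<^sup>2 * B)) / 2"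
proof -
  define V where "V = (\<integral>\<omega>. (X t \<omega> - X s \<omega>)\<^sup>2 \<partial>M)"
  define D where "D = (\<lambda>\<omega>. X t \<omega> - X s \<omega>)"
  define Y where "Y = (\<lambda>\<omega>. exp (2 * c * X u \<omega>))"
  have Dm[measurable]: "D \<in> borel_measurable M" unfolding D_def using s t by measurable
  have Ym[measurable]: "Y \<in> borel_measurable M" unfolding Y_def using u by measurable
  have Y2eq: "(Y \<omega>)\<^sup>2 = exp ((4 * c) * X u \<omega>)" for \<omega>
    unfolding Y_def by (simp add: power2_eq_square exp_add[symmetric])
  have Y2i: "integrable M (\<lambda>\<omega>. (Y \<omega>)\<^sup>2)" unfolding Y2eq by (rule mgf_X(1)[OF u])
  have Y2b: "(\<integral>\<omega>. (Y \<omega>)\<^sup>2 \<partial>M) \<le> exp (8 * c\<^sup>2 * B)"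
  proof -
    have "(4 * c)\<^sup>2 * B / 2 = 8 * c\<^sup>2 * B" by (simp add: power_mult_distrib)
    moreover have "8 * c\<^sup>2 * B = 8 * (B * c\<^sup>2)" by simp
    ultimately show ?thesis unfolding Y2eq using mgf_X(2)[OF u, of "4 * c"] by (simp only:)
  qed
  have D4i: "integrable M (\<lambda>\<omega>. (D \<omega>) ^ 4)" unfolding D_def by (rule D4(1)[OF s t])
  have D4b: "(\<integral>\<omega>. (D \<omega>) ^ 4 \<partial>M) \<le> 1024 * V\<^sup>2" unfolding D_def V_def by (rule D4(2)[OF s t])
  have D22: "((D \<omega>)\<^sup>2)\<^sup>2 = (D \<omega>) ^ 4" for \<omega> by simp
  have intDY: "integrable M (\<lambda>\<omega>. (D \<omega>)\<^sup>2 * Y \<omega>)"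
  proof (rule Bochner_Integration.integrable_bound[of _ "\<lambda>\<omega>. ((D \<omega>) ^ 4 + (Y \<omega>)\<^sup>2) / 2"])
    show "integrable M (\<lambda>\<omega>. ((D \<omega>) ^ 4 + (Y \<omega>)\<^sup>2) / 2)" using D4i Y2i by auto
    show "AE x in M. norm ((D x)\<^sup>2 * Y x) \<le> norm (((D x) ^ 4 + (Y x)\<^sup>2) / 2)"
      using abs_prod_le[of "(D _)\<^sup>2" "Y _"] by (auto simp: D22)
  qed measurable
  show int: "integrable M (\<lambda>\<omega>. (X t \<omega> - X s \<omega>)\<^sup>2 * exp (2 * c * X u \<omega>))"
    using intDY unfolding D_def Y_def .
  have V0: "V \<ge> 0" unfolding V_def by simp
  have "(\<integral>\<omega>. (D \<omega>)\<^sup>2 * Y \<omega> \<partial>M) \<le> V * (1024 + exp (8 * c\<^sup>2 * B)) / 2"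
  proof (cases "V = 0")
    case True
    have "AE \<omega> in M. (D \<omega>)\<^sup>2 = 0"
      using integral_nonneg_eq_0_iff_AE[OF D2[OF s t]] True unfolding V_def D_def by simp
    hence "(\<integral>\<omega>. (D \<omega>)\<^sup>2 * Y \<omega> \<partial>M) = (\<integral>\<omega>. 0 \<partial>M)" by (intro integral_cong_AE) auto
    thus ?thesis using True by simp
  next
    case False
    hence Vp: "V > 0" using V0 by simp
    have "(\<integral>\<omega>. (D \<omega>)\<^sup>2 * Y \<omega> \<partial>M) \<le> (\<integral>\<omega>. (1 / V) / 2 * (D \<omega>) ^ 4 + (Y \<omega>)\<^sup>2 / (2 * (1 / V)) \<partial>M)"
    proof (rule integral_mono)
      show "integrable M (\<lambda>\<omega>. (D \<omega>)\<^sup>2 * Y \<omega>)" by (rule intDY)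
      show "integrable M (\<lambda>\<omega>. (1 / V) / 2 * (D \<omega>) ^ 4 + (Y \<omega>)\<^sup>2 / (2 * (1 / V)))" using D4i Y2i by auto
      fix \<omega> show "(D \<omega>)\<^sup>2 * Y \<omega> \<le> (1 / V) / 2 * (D \<omega>) ^ 4 + (Y \<omega>)\<^sup>2 / (2 * (1 / V))"
        using amgm_w[of "1 / V" "(D \<omega>)\<^sup>2" "Y \<omega>"] Vp by (simp add: D22)
    qed
    also have "\<dots> = (1 / V) / 2 * (\<integral>\<omega>. (D \<omega>) ^ 4 \<partial>M) + V / 2 * (\<integral>\<omega>. (Y \<omega>)\<^sup>2 \<partial>M)"
      using D4i Y2i by (simp add: field_simps)
    also have "\<dots> \<le> (1 / V) / 2 * (1024 * V\<^sup>2) + V / 2 * exp (8 * c\<^sup>2 * B)"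
      using D4b Y2b Vp by (intro add_mono mult_left_mono) auto
    also have "\<dots> = V * (1024 + exp (8 * c\<^sup>2 * B)) / 2" using Vp by (simp add: field_simps power2_eq_square)
    finally show ?thesis .
  qed
  thus "(\<integral>\<omega>. (X t \<omega> - X s \<omega>)\<^sup>2 * exp (2 * c * X u \<omega>) \<partial>M)
       \<le> (\<integral>\<omega>. (X t \<omega> - X s \<omega>)\<^sup>2 \<partial>M) * (1024 + exp (8 * c\<^sup>2 * B)) / 2"
    unfolding D_def Y_def V_def .
qed

end


lemma sq3: "((x::real) - y + z)\<^sup>2 \<le> 3 * x\<^sup>2 + 3 * y\<^sup>2 + 3 * z\<^sup>2"
proof -
  have "0 \<le> (x + y)\<^sup>2 + (x - z)\<^sup>2 + (y + z)\<^sup>2" by simp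
  thus ?thesis by (simp add: power2_eq_square algebra_simps)
qed

context L4 begin

lemma trunc_R: assumes "\<epsilon> > 0" shows "\<forall>t\<in>I. R (KL_trunc_index M X e \<epsilon>) t \<le> \<epsilon>\<^sup>2"
proof -
  obtain L0 where "\<forall>t\<in>I. R L0 t < \<epsilon>\<^sup>2" using unif_R[of "\<epsilon>\<^sup>2"] assms by auto
  hence P: "\<forall>t\<in>I. R L0 t \<le> \<epsilon>\<^sup>2" by (auto intro: less_imp_le)
  show ?thesis unfolding KL_trunc_index_def R_def[symmetric]
    by (rule LeastI[of _ L0]) (rule P)
qed

lemma Vbound:
  assumes eps: "\<epsilon> > 0" and s: "s \<in> I" and t: "t \<in> I"
    and CM: "bdd_above (range (\<lambda>k. lam k * (G k)\<^sup>2))"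
  shows "(\<integral>\<omega>. (X t \<omega> - X s \<omega>)\<^sup>2 \<partial>M)
     \<le> 3 * real (KL_trunc_index M X e \<epsilon>) * (SUP k. lam k * (G k)\<^sup>2) * (t - s)\<^sup>2 + 6 * \<epsilon>\<^sup>2"
proof -
  define L where "L = KL_trunc_index M X e \<epsilon>"
  define Cm where "Cm = (SUP k. lam k * (G k)\<^sup>2)"
  have RL: "R L t \<le> \<epsilon>\<^sup>2" "R L s \<le> \<epsilon>\<^sup>2" using trunc_R[OF eps] s t unfolding L_def by auto
  define PD where "PD = (\<lambda>\<omega>. \<Sum>j<L. Z j \<omega> * (e j t - e j s))"
  define A where "A = (\<lambda>\<omega>. (\<Sum>j<L. Z j \<omega> * e j t) - X t \<omega>)"
  define Bs where "Bs = (\<lambda>\<omega>. (\<Sum>j<L. Z j \<omega> * e j s) - X s \<omega>)"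
  have dec: "X t \<omega> - X s \<omega> = PD \<omega> - A \<omega> + Bs \<omega>" for \<omega>
    unfolding PD_def A_def Bs_def by (simp add: algebra_simps sum_subtractf)
  have iPD: "integrable M (\<lambda>\<omega>. (PD \<omega>)\<^sup>2)" unfolding PD_def by (rule sumZ_sq(1)) simp
  have iA: "integrable M (\<lambda>\<omega>. (A \<omega>)\<^sup>2)" unfolding A_def by (rule R_int[OF t])
  have iB: "integrable M (\<lambda>\<omega>. (Bs \<omega>)\<^sup>2)" unfolding Bs_def by (rule R_int[OF s])
  have "(\<integral>\<omega>. (X t \<omega> - X s \<omega>)\<^sup>2 \<partial>M) \<le> (\<integral>\<omega>. 3 * (PD \<omega>)\<^sup>2 + 3 * (A \<omega>)\<^sup>2 + 3 * (Bs \<omega>)\<^sup>2 \<partial>M)"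
  proof (rule integral_mono)
    show "integrable M (\<lambda>\<omega>. (X t \<omega> - X s \<omega>)\<^sup>2)" by (rule D2[OF s t])
    show "integrable M (\<lambda>\<omega>. 3 * (PD \<omega>)\<^sup>2 + 3 * (A \<omega>)\<^sup>2 + 3 * (Bs \<omega>)\<^sup>2)" using iPD iA iB by auto
  qed (simp add: dec sq3)
  also have "\<dots> = 3 * (\<integral>\<omega>. (PD \<omega>)\<^sup>2 \<partial>M) + 3 * R L t + 3 * R L s"
  proof -
    have "(\<integral>\<omega>. (A \<omega>)\<^sup>2 \<partial>M) = R L t" unfolding A_def R_def ..
    moreover have "(\<integral>\<omega>. (Bs \<omega>)\<^sup>2 \<partial>M) = R L s" unfolding Bs_def R_def ..
    ultimately show ?thesis using iPD iA iB by simp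
  qed
  also have "(\<integral>\<omega>. (PD \<omega>)\<^sup>2 \<partial>M) = (\<Sum>j<L. lam j * (e j t - e j s)\<^sup>2)"
    unfolding PD_def by (rule sumZ_sq(2)) simp
  also have "\<dots> \<le> (\<Sum>j<L. Cm * (t - s)\<^sup>2)"
  proof (rule sum_mono)
    fix j
    have "\<bar>e j t - e j s\<bar> \<le> G j * \<bar>t - s\<bar>" using e_lip s t by blast
    hence "\<bar>e j t - e j s\<bar>\<^sup>2 \<le> (G j * \<bar>t - s\<bar>)\<^sup>2"
      by (intro power_mono) simp_all
    hence "(e j t - e j s)\<^sup>2 \<le> (G j)\<^sup>2 * (t - s)\<^sup>2" by (simp add: power_mult_distrib)
    hence "lam j * (e j t - e j s)\<^sup>2 \<le> lam j * ((G j)\<^sup>2 * (t - s)\<^sup>2)"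
      using lam_nonneg by (intro mult_left_mono) auto
    hence "lam j * (e j t - e j s)\<^sup>2 \<le> lam j * (G j)\<^sup>2 * (t - s)\<^sup>2" by (simp add: mult.assoc)
    also have "lam j * (G j)\<^sup>2 \<le> Cm" unfolding Cm_def by (rule cSUP_upper[OF _ CM]) simp
    hence "lam j * (G j)\<^sup>2 * (t - s)\<^sup>2 \<le> Cm * (t - s)\<^sup>2" by (simp add: mult_right_mono)
    finally show "lam j * (e j t - e j s)\<^sup>2 \<le> Cm * (t - s)\<^sup>2" .
  qed
  also have "(\<Sum>j<L. Cm * (t - s)\<^sup>2) = real L * Cm * (t - s)\<^sup>2" by simp
  finally show ?thesis using RL unfolding L_def[symmetric] Cm_def[symmetric] by linarith
qed

end


context L4 begin

lemma final:
  fixes g :: "real \<Rightarrow> real \<Rightarrow> real" and c_g K_g K'_g :: real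
  assumes C_M: "bdd_above (range (\<lambda>k. lam k * (G k)\<^sup>2))"
    and K_g: "K_g \<ge> 0" and K'_g: "K'_g \<ge> 0"
    and g_lip: "\<forall>t\<in>{0..1}. \<forall>x y. g t x - g t y \<le> max \<bar>exp (c_g * x) - exp (c_g * y)\<bar> (K_g * \<bar>x - y\<bar>)"
    and g_time: "\<forall>x. \<forall>s\<in>{0..1}. \<forall>t\<in>{0..1}. \<bar>g t x - g s x\<bar> \<le> K'_g * \<bar>t - s\<bar>"
  shows "\<exists>C\<^sub>3::real. \<forall>\<epsilon>>0. \<forall>s\<in>{0..1}. \<forall>t\<in>{0..1}.
           integrable M (\<lambda>\<omega>. (g t (X t \<omega>) - g s (X s \<omega>))\<^sup>2) \<and>
           (\<integral>\<omega>. (g t (X t \<omega>) - g s (X s \<omega>))\<^sup>2 \<partial>M)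
             \<le> C\<^sub>3 * ((real (KL_trunc_index M X e \<epsilon>) + K'_g\<^sup>2) * (t - s)\<^sup>2 + \<epsilon>\<^sup>2)"
proof -
  define c where "c = c_g"
  define Cm where "Cm = (SUP k. lam k * (G k)\<^sup>2)"
  have Cm0: "Cm \<ge> 0"
  proof -
    have "lam 0 * (G 0)\<^sup>2 \<le> Cm" unfolding Cm_def by (rule cSUP_upper[OF _ C_M]) simp
    moreover have "lam 0 * (G 0)\<^sup>2 \<ge> 0" using lam_nonneg by simp
    ultimately show ?thesis by linarith
  qed
  define A where "A = 4 * c\<^sup>2 * (1024 + exp (8 * c\<^sup>2 * B)) + 2 * K_g\<^sup>2"
  have A0: "A \<ge> 0" unfolding A_def by (intro add_nonneg_nonneg mult_nonneg_nonneg) auto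
  define C3 where "C3 = 3 * A * Cm + 6 * A + 2"
  show ?thesis
  proof (intro exI[of _ C3] allI impI ballI conjI)
    fix \<epsilon> s t :: real assume eps: "\<epsilon> > 0" and s: "s \<in> I" and t: "t \<in> I"
    define L where "L = KL_trunc_index M X e \<epsilon>"
    define V where "V = (\<integral>\<omega>. (X t \<omega> - X s \<omega>)\<^sup>2 \<partial>M)"
    have V0: "V \<ge> 0" unfolding V_def by simp
    have gc: "continuous_on UNIV (g u)" if "u \<in> I" for u
      by (rule g_cont[of _ c_g K_g]) (use g_lip that in blast)
    have gm[measurable]: "g u \<in> borel_measurable borel" if "u \<in> I" for u
      by (rule borel_measurable_continuous_onI[OF gc[OF that]])
    define RHS where "RHS = (\<lambda>\<omega>. 4 * c\<^sup>2 * ((X t \<omega> - X s \<omega>)\<^sup>2 * exp (2 * c * X t \<omega>)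
        + (X t \<omega> - X s \<omega>)\<^sup>2 * exp (2 * c * X s \<omega>)) + 2 * K_g\<^sup>2 * (X t \<omega> - X s \<omega>)\<^sup>2 + 2 * K'_g\<^sup>2 * (t - s)\<^sup>2)"
    have pt: "(g t (X t \<omega>) - g s (X s \<omega>))\<^sup>2 \<le> RHS \<omega>" for \<omega>
    proof -
      define x where "x = X t \<omega>"
      define y where "y = X s \<omega>"
      have h1: "\<bar>g t x - g t y\<bar> \<le> max \<bar>exp (c_g * x) - exp (c_g * y)\<bar> (K_g * \<bar>x - y\<bar>)"
      proof -
        have "g t x - g t y \<le> max \<bar>exp (c_g * x) - exp (c_g * y)\<bar> (K_g * \<bar>x - y\<bar>)" using g_lip t by blast
        moreover have "g t y - g t x \<le> max \<bar>exp (c_g * y) - exp (c_g * x)\<bar> (K_g * \<bar>y - x\<bar>)" using g_lip t by blast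
        ultimately show ?thesis by (simp add: abs_le_iff abs_minus_commute)
      qed
      have h2: "\<bar>g t y - g s y\<bar> \<le> K'_g * \<bar>t - s\<bar>" using g_time s t by blast
      have "(g t x - g s y)\<^sup>2 = ((g t x - g t y) + (g t y - g s y))\<^sup>2" by simp
      also have "\<dots> \<le> 2 * (exp (c_g * x) - exp (c_g * y))\<^sup>2 + 2 * K_g\<^sup>2 * (x - y)\<^sup>2 + 2 * (K'_g * \<bar>t - s\<bar>)\<^sup>2"
        by (rule g_pt[OF h1 h2 K_g])
      also have "(exp (c_g * x) - exp (c_g * y))\<^sup>2 \<le> 2 * c_g\<^sup>2 * (x - y)\<^sup>2 * (exp (2 * c_g * x) + exp (2 * c_g * y))"
        by (rule exp_diff_sq)
      hence "2 * (exp (c_g * x) - exp (c_g * y))\<^sup>2 + 2 * K_g\<^sup>2 * (x - y)\<^sup>2 + 2 * (K'_g * \<bar>t - s\<bar>)\<^sup>2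
          \<le> 2 * (2 * c_g\<^sup>2 * (x - y)\<^sup>2 * (exp (2 * c_g * x) + exp (2 * c_g * y))) + 2 * K_g\<^sup>2 * (x - y)\<^sup>2 + 2 * (K'_g * \<bar>t - s\<bar>)\<^sup>2"
        by simp
      also have "\<dots> = RHS \<omega>" unfolding RHS_def x_def y_def c_def
        by (simp add: algebra_simps power_mult_distrib)
      finally show ?thesis unfolding x_def y_def .
    qed
    have e1: "integrable M (\<lambda>\<omega>. (X t \<omega> - X s \<omega>)\<^sup>2 * exp (2 * c * X t \<omega>))" by (rule EDY(1)[OF s t t])
    have e2: "integrable M (\<lambda>\<omega>. (X t \<omega> - X s \<omega>)\<^sup>2 * exp (2 * c * X s \<omega>))" by (rule EDY(1)[OF s t s])
    have e3: "integrable M (\<lambda>\<omega>. (X t \<omega> - X s \<omega>)\<^sup>2)" by (rule D2[OF s t])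
    have iR: "integrable M RHS" unfolding RHS_def using e1 e2 e3 by auto
    have lm: "(\<lambda>\<omega>. (g t (X t \<omega>) - g s (X s \<omega>))\<^sup>2) \<in> borel_measurable M"
      using s t by measurable
    show "integrable M (\<lambda>\<omega>. (g t (X t \<omega>) - g s (X s \<omega>))\<^sup>2)"
      by (rule Bochner_Integration.integrable_bound[OF iR lm]) (use pt in \<open>auto intro!: AE_I2 order_trans[OF _ abs_ge_self]\<close>)
    hence iL: "integrable M (\<lambda>\<omega>. (g t (X t \<omega>) - g s (X s \<omega>))\<^sup>2)" .
    have "(\<integral>\<omega>. (g t (X t \<omega>) - g s (X s \<omega>))\<^sup>2 \<partial>M) \<le> (\<integral>\<omega>. RHS \<omega> \<partial>M)"
      by (rule integral_mono[OF iL iR pt])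
    also have "(\<integral>\<omega>. RHS \<omega> \<partial>M) = 4 * c\<^sup>2 * ((\<integral>\<omega>. (X t \<omega> - X s \<omega>)\<^sup>2 * exp (2 * c * X t \<omega>) \<partial>M)
        + (\<integral>\<omega>. (X t \<omega> - X s \<omega>)\<^sup>2 * exp (2 * c * X s \<omega>) \<partial>M)) + 2 * K_g\<^sup>2 * V + 2 * K'_g\<^sup>2 * (t - s)\<^sup>2"
      unfolding RHS_def V_def using e1 e2 e3 by (simp add: prob_space)
    also have "\<dots> \<le> 4 * c\<^sup>2 * (V * (1024 + exp (8 * c\<^sup>2 * B)) / 2 + V * (1024 + exp (8 * c\<^sup>2 * B)) / 2)
        + 2 * K_g\<^sup>2 * V + 2 * K'_g\<^sup>2 * (t - s)\<^sup>2"
      using EDY(2)[OF s t t, of c] EDY(2)[OF s t s, of c] unfolding V_def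
      by (intro add_mono mult_left_mono order_refl) auto
    also have "\<dots> = A * V + 2 * K'_g\<^sup>2 * (t - s)\<^sup>2" unfolding A_def by (simp add: algebra_simps)
    also have "\<dots> \<le> A * (3 * real L * Cm * (t - s)\<^sup>2 + 6 * \<epsilon>\<^sup>2) + 2 * K'_g\<^sup>2 * (t - s)\<^sup>2"
      using Vbound[OF eps s t C_M] A0 unfolding V_def L_def Cm_def
      by (intro add_mono mult_left_mono order_refl) auto
    also have "\<dots> \<le> C3 * ((real L + K'_g\<^sup>2) * (t - s)\<^sup>2 + \<epsilon>\<^sup>2)"
    proof -
      define d where "d = (t - s)\<^sup>2"
      define q where "q = K'_g\<^sup>2"
      define E where "E = \<epsilon>\<^sup>2"
      have d0: "d \<ge> 0" "q \<ge> 0" "E \<ge> 0" "real L \<ge> 0" unfolding d_def q_def E_def by auto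
      have "C3 * ((real L + q) * d + E) = 3 * A * Cm * (real L * d) + 3 * A * Cm * (q * d + E)
          + 6 * A * E + 6 * A * ((real L + q) * d) + 2 * (real L * d) + 2 * (q * d) + 2 * E"
        unfolding C3_def by (simp add: algebra_simps)
      moreover have "0 \<le> 3 * A * Cm * (q * d + E)" using A0 Cm0 d0 by simp
      moreover have "0 \<le> 6 * A * ((real L + q) * d)" using A0 d0 by simp
      moreover have "0 \<le> 2 * (real L * d)" "0 \<le> 2 * E" using d0 by simp_all
      ultimately have "A * (3 * real L * Cm * d + 6 * E) + 2 * q * d \<le> C3 * ((real L + q) * d + E)"
        by (simp add: algebra_simps)
      thus ?thesis unfolding d_def q_def E_def .
    qed
    finally show "(\<integral>\<omega>. (g t (X t \<omega>) - g s (X s \<omega>))\<^sup>2 \<partial>M)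
        \<le> C3 * ((real (KL_trunc_index M X e \<epsilon>) + K'_g\<^sup>2) * (t - s)\<^sup>2 + \<epsilon>\<^sup>2)"
      unfolding L_def .
  qed
qed

end

theorem lemma4:
  fixes M :: "'a measure" and X :: "real \<Rightarrow> 'a \<Rightarrow> real"
    and e :: "nat \<Rightarrow> real \<Rightarrow> real" and lam :: "nat \<Rightarrow> real" and G :: "nat \<Rightarrow> real"
    and g :: "real \<Rightarrow> real \<Rightarrow> real" and c_g K_g K'_g :: real
  assumes M: "prob_space M"
    and X_meas: "(\<lambda>(t, \<omega>). indicator {0..1} t * X t \<omega>) \<in> borel_measurable (lborel \<Otimes>\<^sub>M M)"
    and X_sq: "\<forall>t\<in>{0..1}. integrable M (\<lambda>\<omega>. (X t \<omega>)\<^sup>2)"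
    and X_centered: "\<forall>t\<in>{0..1}. integrable M (X t) \<and> (\<integral>\<omega>. X t \<omega> \<partial>M) = 0"
    and cov_cont: "continuous_on ({0..1} \<times> {0..1}) (\<lambda>(s, t). cov_fun M X s t)"
    and e_meas: "\<forall>k. e k \<in> borel_measurable lborel"
    and e_orth: "\<forall>i j. set_integrable lborel {0..1} (\<lambda>s. e i s * e j s) \<and>
                   (LINT s:{0..1}|lborel. e i s * e j s) = (if i = j then 1 else 0)"
    and e_eigen: "\<forall>k. \<forall>t\<in>{0..1}. set_integrable lborel {0..1} (\<lambda>s. cov_fun M X s t * e k s) \<and>
                   (LINT s:{0..1}|lborel. cov_fun M X s t * e k s) = lam k * e k t"
    and e_complete: "\<forall>f. f \<in> borel_measurable lborel \<longrightarrow>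
                   set_integrable lborel {0..1} (\<lambda>s. (f s)\<^sup>2) \<longrightarrow>
                   (\<forall>k. (LINT s:{0..1}|lborel. f s * e k s) = 0) \<longrightarrow>
                   (\<forall>t\<in>{0..1}. (LINT s:{0..1}|lborel. cov_fun M X s t * f s) = 0)"
    and lam_mono: "antimono lam"
    and lam_nonneg: "\<forall>k. lam k \<ge> 0"
    and Z_indep: "prob_space.indep_vars M (\<lambda>_. borel) (KL_coeff X e) UNIV"
    and Z_subg: "\<forall>k. sub_gaussian M (KL_coeff X e k) 0 (sqrt (lam k))"
    and e_lip: "\<forall>k. \<forall>x\<in>{0..1}. \<forall>y\<in>{0..1}. \<bar>e k x - e k y\<bar> \<le> G k * \<bar>x - y\<bar>"
    and C_M: "bdd_above (range (\<lambda>k. lam k * (G k)\<^sup>2))"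
    and K_g: "K_g \<ge> 0" and K'_g: "K'_g \<ge> 0"
    and g_lip: "\<forall>t\<in>{0..1}. \<forall>x y. g t x - g t y \<le> max \<bar>exp (c_g * x) - exp (c_g * y)\<bar> (K_g * \<bar>x - y\<bar>)"
    and g_time: "\<forall>x. \<forall>s\<in>{0..1}. \<forall>t\<in>{0..1}. \<bar>g t x - g s x\<bar> \<le> K'_g * \<bar>t - s\<bar>"
  shows "\<exists>C\<^sub>3::real. \<forall>\<epsilon>>0. \<forall>s\<in>{0..1}. \<forall>t\<in>{0..1}.
           integrable M (\<lambda>\<omega>. (g t (X t \<omega>) - g s (X s \<omega>))\<^sup>2) \<and>
           (\<integral>\<omega>. (g t (X t \<omega>) - g s (X s \<omega>))\<^sup>2 \<partial>M)
             \<le> C\<^sub>3 * ((real (KL_trunc_index M X e \<epsilon>) + K'_g\<^sup>2) * (t - s)\<^sup>2 + \<epsilon>\<^sup>2)"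
proof -
  interpret L: L4 M X e lam G
    using M X_meas X_sq X_centered cov_cont e_meas e_orth e_eigen e_complete lam_nonneg Z_indep Z_subg e_lip
    by (simp add: L4_def L4_axioms_def)
  show ?thesis by (rule L.final[OF C_M K_g K'_g g_lip g_time])
qed

end
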